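(* Let $\sigma\in\prod_{i\in N}\Delta(A_i)$ be (1) a strict Nash equilibrium of $G$, or (2) a completely mixed Nash equilibrium of $G$ (every pure action of every player has positive probability), or (3) the unique Nash equilibrium of $G$. Then $\sigma$ is stable under no observability.
   Context: Objective game: $G=(N,A,\pi)$ is a finite $n$-player normal-form game, $N=\{1,\dots,n\}$, finite action sets $A_i$, $A=\prod_iA_i$, fitness functions $\pi_i:A\to\mathbb{R}$ extended multilinearly to $\prod_i\Delta(A_i)$. Preference types: $\Theta=\mathbb{R}^A$ (extended multilinearly). $\mathcal{M}(\Theta^n)$: product distributions $\mu=\mu_1\times\dots\times\mu_n$ on $\Theta^n$ with finitely supported marginals; $\operatorname{supp}\mu=\prod_i\operatorname{supp}\mu_i$, $\mu_{-i}(\theta_{-i})=\prod_{j\neq i}\mu_j(\theta_j)$. Mutants: for nonempty $J\subseteq N$, a mutant sub-profile is $\tilde\theta_J\in\prod_{j\in J}(\Theta\setminus\operatorname{supp}\mu_j)$ with shares $\varepsilon\in(0,1)^{|J|}$, $\|\varepsilon\|=\max_j\varepsilon_j$; post-entry $\tilde\mu^\varepsilon_i=(1-\varepsilon_i)\mu_i+\varepsilon_i\delta_{\tilde\theta_i}$ for $i\in J$, $\tilde\mu^\varepsilon_i=\mu_i$ otherwise. No observability: a strategy of player $i$ is $s_i:\operatorname{supp}\mu_i\to\Delta(A_i)$, $s(\theta)=(s_1(\theta_1),\dots,s_n(\theta_n))$; $s$ is a Bayesian–Nash equilibrium if for each $i$ and $\theta_i\in\operatorname{supp}\mu_i$, $s_i(\theta_i)\in\arg\max_{\sigma_i\in\Delta(A_i)}\sum_{\theta'_{-i}\in\operatorname{supp}\mu_{-i}}\mu_{-i}(\theta'_{-i})\theta_i(\sigma_i,s_{-i}(\theta'_{-i}))$;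 $B_0(\mu)$ is the set of these; $(\mu,s)$ with $s\in B_0(\mu)$ is a configuration, with aggregate outcome $x(\mu,s)=\big(\sum_{\theta_i}\mu_i(\theta_i)s_i(\theta_i)\big)_{i}$. Average fitness: $\Pi_{\theta_i}(\mu;s)=\pi_i(s_i(\theta_i),x(\mu,s)_{-i})$. Balanced: all types in each $\operatorname{supp}\mu_i$ have equal average fitness. Nearby set: for $\eta\ge0$, $B_0^\eta(\tilde\mu^\varepsilon;s)=\{\tilde s\in B_0(\tilde\mu^\varepsilon):\max_{i}\|\tilde s_i(\theta_i)-s_i(\theta_i)\|\le\eta\ \forall\theta\in\operatorname{supp}\mu\}$ (Euclidean norm). $(\mu,s)$ is stable if it is balanced and for every nonempty $J\subseteq N$, every $\tilde\theta_J$ and every $\eta>0$ there exist $\bar\eta\in[0,\eta)$ and $\bar\epsilon\in(0,1)$ such that for every $\varepsilon$ with $\|\varepsilon\|\in(0,\bar\epsilon)$, $B_0^{\bar\eta}(\tilde\mu^\varepsilon;s)\neq\emptyset$ and every $\tilde s\in B_0^{\bar\eta}(\tilde\mu^\varepsilon;s)$ satisfies either (i) some $j\in J$ has $\Pi_{\theta_j}(\tilde\mu^\varepsilon;\tilde s)>\Pi_{\tilde\theta_j}(\tilde\mu^\varepsilon;\tilde s)$ for all $\theta_j\in\operatorname{supp}\mu_j$, or (ii) for every $i$ all types in $\operatorname{supp}\tilde\mu^\varepsilon_i$ have equal average fitness under $(\tilde\mu^\varepsilon,\tilde s)$. A profile $\sigma$ is stable under no observability if $\sigma=x(\mu,s)$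 for some stable configuration $(\mu,s)$. *)

theory Defs
  imports Complex_Main "HOL-Library.FuncSet"
begin

(* Players are 0..<n (the paper's 1..n); A i is the finite action set of player i.
   A preference type is a real function on pure profiles (zero outside the profile set,
   so that Theta = R^A is represented faithfully). *)

type_synonym 'a ptype = "(nat \<Rightarrow> 'a) \<Rightarrow> real"

definition mixed_strategy :: "'a set \<Rightarrow> ('a \<Rightarrow> real) \<Rightarrow> bool" where
  "mixed_strategy Ai t \<longleftrightarrow> (\<forall>a\<in>Ai. 0 \<le> t a) \<and> (\<Sum>a\<in>Ai. t a) = 1 \<and> (\<forall>a. a \<notin> Ai \<longrightarrow> t a = 0)"

definition mixed_profile :: "nat \<Rightarrow> (nat \<Rightarrow> 'a set) \<Rightarrow> (nat \<Rightarrow> 'a \<Rightarrow> real) \<Rightarrow> bool" where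
  "mixed_profile n A \<sigma> \<longleftrightarrow> (\<forall>i<n. mixed_strategy (A i) (\<sigma> i))"

definition mlext :: "nat \<Rightarrow> (nat \<Rightarrow> 'a set) \<Rightarrow> 'a ptype \<Rightarrow> (nat \<Rightarrow> 'a \<Rightarrow> real) \<Rightarrow> real" where
  "mlext n A u \<sigma> = (\<Sum>a\<in>PiE {..<n} A. (\<Prod>i<n. \<sigma> i (a i)) * u a)"

definition nash_eq :: "nat \<Rightarrow> (nat \<Rightarrow> 'a set) \<Rightarrow> (nat \<Rightarrow> 'a ptype) \<Rightarrow> (nat \<Rightarrow> 'a \<Rightarrow> real) \<Rightarrow> bool" where
  "nash_eq n A \<pi> \<sigma> \<longleftrightarrow> mixed_profile n A \<sigma> \<and>
     (\<forall>i<n. \<forall>t. mixed_strategy (A i) t \<longrightarrow> mlext n A (\<pi> i) (\<sigma>(i := t)) \<le> mlext n A (\<pi> i) \<sigma>)"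

definition strict_nash_eq :: "nat \<Rightarrow> (nat \<Rightarrow> 'a set) \<Rightarrow> (nat \<Rightarrow> 'a ptype) \<Rightarrow> (nat \<Rightarrow> 'a \<Rightarrow> real) \<Rightarrow> bool" where
  "strict_nash_eq n A \<pi> \<sigma> \<longleftrightarrow> nash_eq n A \<pi> \<sigma> \<and>
     (\<forall>i<n. \<forall>t. mixed_strategy (A i) t \<and> t \<noteq> \<sigma> i \<longrightarrow> mlext n A (\<pi> i) (\<sigma>(i := t)) < mlext n A (\<pi> i) \<sigma>)"

definition completely_mixed :: "nat \<Rightarrow> (nat \<Rightarrow> 'a set) \<Rightarrow> (nat \<Rightarrow> 'a \<Rightarrow> real) \<Rightarrow> bool" where
  "completely_mixed n A \<sigma> \<longleftrightarrow> (\<forall>i<n. \<forall>a\<in>A i. 0 < \<sigma> i a)"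

definition unique_nash_eq :: "nat \<Rightarrow> (nat \<Rightarrow> 'a set) \<Rightarrow> (nat \<Rightarrow> 'a ptype) \<Rightarrow> (nat \<Rightarrow> 'a \<Rightarrow> real) \<Rightarrow> bool" where
  "unique_nash_eq n A \<pi> \<sigma> \<longleftrightarrow> nash_eq n A \<pi> \<sigma> \<and>
     (\<forall>\<sigma>'. nash_eq n A \<pi> \<sigma>' \<longrightarrow> (\<forall>i<n. \<sigma>' i = \<sigma> i))"

definition types :: "nat \<Rightarrow> (nat \<Rightarrow> 'a set) \<Rightarrow> 'a ptype set" where
  "types n A = {\<theta>. \<forall>a. a \<notin> PiE {..<n} A \<longrightarrow> \<theta> a = 0}"

definition supp :: "('b \<Rightarrow> real) \<Rightarrow> 'b set" where
  "supp m = {x. m x \<noteq> 0}"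

definition population :: "nat \<Rightarrow> (nat \<Rightarrow> 'a set) \<Rightarrow> (nat \<Rightarrow> 'a ptype \<Rightarrow> real) \<Rightarrow> bool" where
  "population n A \<mu> \<longleftrightarrow> (\<forall>i<n. finite (supp (\<mu> i)) \<and> supp (\<mu> i) \<subseteq> types n A \<and>
      (\<forall>\<theta>. 0 \<le> \<mu> i \<theta>) \<and> (\<Sum>\<theta>\<in>supp (\<mu> i). \<mu> i \<theta>) = 1)"

definition exp_util ::
  "nat \<Rightarrow> (nat \<Rightarrow> 'a set) \<Rightarrow> (nat \<Rightarrow> 'a ptype \<Rightarrow> real) \<Rightarrow> (nat \<Rightarrow> 'a ptype \<Rightarrow> 'a \<Rightarrow> real)
    \<Rightarrow> nat \<Rightarrow> 'a ptype \<Rightarrow> ('a \<Rightarrow> real) \<Rightarrow> real" where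
  "exp_util n A \<mu> s i \<theta>i t =
     (\<Sum>\<theta>'\<in>PiE ({..<n} - {i}) (\<lambda>j. supp (\<mu> j)).
        (\<Prod>j\<in>{..<n} - {i}. \<mu> j (\<theta>' j)) * mlext n A \<theta>i ((\<lambda>j. s j (\<theta>' j))(i := t)))"

definition BNE_set ::
  "nat \<Rightarrow> (nat \<Rightarrow> 'a set) \<Rightarrow> (nat \<Rightarrow> 'a ptype \<Rightarrow> real) \<Rightarrow> (nat \<Rightarrow> 'a ptype \<Rightarrow> 'a \<Rightarrow> real) set" where
  "BNE_set n A \<mu> = {s. \<forall>i<n. \<forall>\<theta>i\<in>supp (\<mu> i). mixed_strategy (A i) (s i \<theta>i) \<and>
      (\<forall>t. mixed_strategy (A i) t \<longrightarrow> exp_util n A \<mu> s i \<theta>i t \<le> exp_util n A \<mu> s i \<theta>i (s i \<theta>i))}"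

definition aggregate ::
  "(nat \<Rightarrow> 'a ptype \<Rightarrow> real) \<Rightarrow> (nat \<Rightarrow> 'a ptype \<Rightarrow> 'a \<Rightarrow> real) \<Rightarrow> nat \<Rightarrow> 'a \<Rightarrow> real" where
  "aggregate \<mu> s i = (\<lambda>a. \<Sum>\<theta>\<in>supp (\<mu> i). \<mu> i \<theta> * s i \<theta> a)"

definition avg_fitness ::
  "nat \<Rightarrow> (nat \<Rightarrow> 'a set) \<Rightarrow> (nat \<Rightarrow> 'a ptype) \<Rightarrow> (nat \<Rightarrow> 'a ptype \<Rightarrow> real)
    \<Rightarrow> (nat \<Rightarrow> 'a ptype \<Rightarrow> 'a \<Rightarrow> real) \<Rightarrow> nat \<Rightarrow> 'a ptype \<Rightarrow> real" where
  "avg_fitness n A \<pi> \<mu> s i \<theta> = mlext n A (\<pi> i) ((aggregate \<mu> s)(i := s i \<theta>))"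

definition balanced ::
  "nat \<Rightarrow> (nat \<Rightarrow> 'a set) \<Rightarrow> (nat \<Rightarrow> 'a ptype) \<Rightarrow> (nat \<Rightarrow> 'a ptype \<Rightarrow> real)
    \<Rightarrow> (nat \<Rightarrow> 'a ptype \<Rightarrow> 'a \<Rightarrow> real) \<Rightarrow> bool" where
  "balanced n A \<pi> \<mu> s \<longleftrightarrow> (\<forall>i<n. \<forall>\<theta>\<in>supp (\<mu> i). \<forall>\<theta>'\<in>supp (\<mu> i).
      avg_fitness n A \<pi> \<mu> s i \<theta> = avg_fitness n A \<pi> \<mu> s i \<theta>')"

definition post_entry ::
  "(nat \<Rightarrow> 'a ptype \<Rightarrow> real) \<Rightarrow> nat set \<Rightarrow> (nat \<Rightarrow> 'a ptype) \<Rightarrow> (nat \<Rightarrow> real) \<Rightarrow> nat \<Rightarrow> 'a ptype \<Rightarrow> real" where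
  "post_entry \<mu> J \<theta>m \<epsilon> i \<theta> =
     (if i \<in> J then (1 - \<epsilon> i) * \<mu> i \<theta> + (if \<theta> = \<theta>m i then \<epsilon> i else 0) else \<mu> i \<theta>)"

definition strat_dist :: "'a set \<Rightarrow> ('a \<Rightarrow> real) \<Rightarrow> ('a \<Rightarrow> real) \<Rightarrow> real" where
  "strat_dist Ai t t' = sqrt (\<Sum>a\<in>Ai. (t a - t' a)\<^sup>2)"

definition nearby_BNE ::
  "nat \<Rightarrow> (nat \<Rightarrow> 'a set) \<Rightarrow> (nat \<Rightarrow> 'a ptype \<Rightarrow> real) \<Rightarrow> (nat \<Rightarrow> 'a ptype \<Rightarrow> real)
    \<Rightarrow> (nat \<Rightarrow> 'a ptype \<Rightarrow> 'a \<Rightarrow> real) \<Rightarrow> real \<Rightarrow> (nat \<Rightarrow> 'a ptype \<Rightarrow> 'a \<Rightarrow> real) set" where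
  "nearby_BNE n A \<mu> \<mu>' s \<eta> = {s' \<in> BNE_set n A \<mu>'.
      \<forall>i<n. \<forall>\<theta>\<in>supp (\<mu> i). strat_dist (A i) (s' i \<theta>) (s i \<theta>) \<le> \<eta>}"

definition configuration ::
  "nat \<Rightarrow> (nat \<Rightarrow> 'a set) \<Rightarrow> (nat \<Rightarrow> 'a ptype \<Rightarrow> real) \<Rightarrow> (nat \<Rightarrow> 'a ptype \<Rightarrow> 'a \<Rightarrow> real) \<Rightarrow> bool" where
  "configuration n A \<mu> s \<longleftrightarrow> population n A \<mu> \<and> s \<in> BNE_set n A \<mu>"

definition stable_config ::
  "nat \<Rightarrow> (nat \<Rightarrow> 'a set) \<Rightarrow> (nat \<Rightarrow> 'a ptype) \<Rightarrow> (nat \<Rightarrow> 'a ptype \<Rightarrow> real)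
    \<Rightarrow> (nat \<Rightarrow> 'a ptype \<Rightarrow> 'a \<Rightarrow> real) \<Rightarrow> bool" where
  "stable_config n A \<pi> \<mu> s \<longleftrightarrow> configuration n A \<mu> s \<and> balanced n A \<pi> \<mu> s \<and>
     (\<forall>J \<theta>m \<eta>. J \<noteq> {} \<and> J \<subseteq> {..<n} \<and> (\<forall>j\<in>J. \<theta>m j \<in> types n A - supp (\<mu> j)) \<and> 0 < \<eta> \<longrightarrow>
        (\<exists>\<eta>b \<epsilon>b. 0 \<le> \<eta>b \<and> \<eta>b < \<eta> \<and> 0 < \<epsilon>b \<and> \<epsilon>b < 1 \<and>
          (\<forall>\<epsilon>. (\<forall>j\<in>J. 0 < \<epsilon> j \<and> \<epsilon> j < 1) \<and> Max (\<epsilon> ` J) < \<epsilon>b \<longrightarrow>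
             (let \<mu>' = post_entry \<mu> J \<theta>m \<epsilon> in
               nearby_BNE n A \<mu> \<mu>' s \<eta>b \<noteq> {} \<and>
               (\<forall>s'\<in>nearby_BNE n A \<mu> \<mu>' s \<eta>b.
                  (\<exists>j\<in>J. \<forall>\<theta>\<in>supp (\<mu> j).
                      avg_fitness n A \<pi> \<mu>' s' j \<theta> > avg_fitness n A \<pi> \<mu>' s' j (\<theta>m j))
                  \<or> balanced n A \<pi> \<mu>' s')))))"

definition stable_no_obs ::
  "nat \<Rightarrow> (nat \<Rightarrow> 'a set) \<Rightarrow> (nat \<Rightarrow> 'a ptype) \<Rightarrow> (nat \<Rightarrow> 'a \<Rightarrow> real) \<Rightarrow> bool" where
  "stable_no_obs n A \<pi> \<sigma> \<longleftrightarrow> (\<exists>\<mu> s. stable_config n A \<pi> \<mu> s \<and> (\<forall>i<n. aggregate \<mu> s i = \<sigma> i))"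

end

theory Submission
  imports Defs "HOL-Analysis.Brouwer_Fixpoint"
begin

lemma approx_fp:
  fixes f :: "(nat \<Rightarrow> real) \<Rightarrow> nat \<Rightarrow> real" and n :: nat
  assumes fC: "\<And>x. (\<forall>i<n. 0 \<le> x i \<and> x i \<le> 1) \<Longrightarrow> (\<forall>i<n. 0 \<le> f x i \<and> f x i \<le> 1)"
    and uc: "\<forall>e>0. \<exists>d>0. \<forall>x y. (\<forall>i<n. 0 \<le> x i \<and> x i \<le> 1) \<longrightarrow> (\<forall>i<n. 0 \<le> y i \<and> y i \<le> 1) \<longrightarrow>
              (\<forall>i<n. \<bar>x i - y i\<bar> < d) \<longrightarrow> (\<forall>i<n. \<bar>f x i - f y i\<bar> < e)"
    and e: "e > 0"
  shows "\<exists>x. (\<forall>i<n. 0 \<le> x i \<and> x i \<le> 1) \<and> (\<forall>i<n. \<bar>f x i - x i\<bar> < e)"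
proof -
  obtain d where d: "d > 0" "\<And>x y. (\<forall>i<n. 0 \<le> x i \<and> x i \<le> 1) \<Longrightarrow> (\<forall>i<n. 0 \<le> y i \<and> y i \<le> 1) \<Longrightarrow>
              (\<forall>i<n. \<bar>x i - y i\<bar> < d) \<Longrightarrow> (\<forall>i<n. \<bar>f x i - f y i\<bar> < e/2)"
  proof -
    have "e/2 > 0" using e by simp
    from uc[rule_format, OF this] obtain d where "d > 0" "\<forall>x y. (\<forall>i<n. 0 \<le> x i \<and> x i \<le> 1) \<longrightarrow> (\<forall>i<n. 0 \<le> y i \<and> y i \<le> 1) \<longrightarrow>
              (\<forall>i<n. \<bar>x i - y i\<bar> < d) \<longrightarrow> (\<forall>i<n. \<bar>f x i - f y i\<bar> < e/2)" by blast
    then show ?thesis using that by blast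
  qed
  define \<delta> where "\<delta> = min d (e/2)"
  have \<delta>: "\<delta> > 0" "\<delta> \<le> d" "\<delta> \<le> e/2" using d e by (auto simp: \<delta>_def)
  obtain p :: nat where p: "1/\<delta> < real p" using reals_Archimedean2 by blast
  have p0: "0 < p" using p \<delta> by (metis divide_pos_pos less_trans of_nat_0_less_iff zero_less_one)
  have pd: "1 / real p < \<delta>" using p \<delta> p0
    by (metis divide_less_eq mult.commute of_nat_0_less_iff)
  define pt where "pt x = (\<lambda>j. real (x j) / real p)" for x :: "nat \<Rightarrow> nat"
  have ptC: "\<forall>j<n. 0 \<le> pt x j \<and> pt x j \<le> 1" if "\<forall>j<n. x j \<le> p" for x
    using that p0 by (auto simp: pt_def divide_le_eq_1)
  define label where "label x i = (if pt x i = 1 then (1::nat) else if pt x i \<le> f (pt x) i then 0 else 1)" for x i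
  have l0: "pt x i \<le> f (pt x) i" if "label x i = 0" for x i
    using that by (auto simp: label_def split: if_splits)
  have l1: "f (pt x) i \<le> pt x i" if "label x i \<noteq> 0" "\<forall>j<n. x j \<le> p" "i < n" for x i
    using that fC[OF ptC[OF that(2)]] by (auto simp: label_def split: if_splits)
  obtain q where q: "\<forall>i<n. q i < p"
    "\<forall>i<n. \<exists>r s. (\<forall>j<n. q j \<le> r j \<and> r j \<le> q j + 1) \<and> (\<forall>j<n. q j \<le> s j \<and> s j \<le> q j + 1) \<and> label r i \<noteq> label s i"
  proof (rule kuhn_lemma[OF p0])
    show "\<forall>x. (\<forall>i<n. x i \<le> p) \<longrightarrow> (\<forall>i<n. label x i = 0 \<or> label x i = 1)"
      by (auto simp: label_def)
    show "\<forall>x. (\<forall>i<n. x i \<le> p) \<longrightarrow> (\<forall>i<n. x i = 0 \<longrightarrow> label x i = 0)"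
    proof (intro allI impI)
      fix x i assume a: "\<forall>i<n. x i \<le> p" "i < n" "x i = 0"
      have "0 \<le> f (pt x) i" using fC[OF ptC[OF a(1)]] a(2) by auto
      then show "label x i = 0" using a by (auto simp: label_def pt_def)
    qed
    show "\<forall>x. (\<forall>i<n. x i \<le> p) \<longrightarrow> (\<forall>i<n. x i = p \<longrightarrow> label x i = 1)"
      using p0 by (auto simp: label_def pt_def)
  qed
  define z where "z = pt q"
  have qle: "\<forall>j<n. q j \<le> p" using q(1) by (auto intro: less_imp_le)
  have zC: "\<forall>j<n. 0 \<le> z j \<and> z j \<le> 1" using ptC[OF qle] by (simp add: z_def)
  have close: "\<bar>pt r j - z j\<bar> < \<delta>" if "\<forall>j<n. q j \<le> r j \<and> r j \<le> q j + 1" "j < n" for r j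
  proof -
    have "pt r j - z j = (real (r j) - real (q j)) / real p" by (simp add: pt_def z_def diff_divide_distrib)
    moreover have "0 \<le> real (r j) - real (q j)" "real (r j) - real (q j) \<le> 1" using that by auto
    ultimately have "\<bar>pt r j - z j\<bar> \<le> 1 / real p" using p0 by (simp add: divide_right_mono)
    then show ?thesis using pd by linarith
  qed
  have rC: "\<forall>j<n. r j \<le> p" if "\<forall>j<n. q j \<le> r j \<and> r j \<le> q j + 1" for r
  proof (intro allI impI)
    fix j assume "j < n" then show "r j \<le> p" using that[rule_format, of j] q(1)[rule_format, of j] by linarith
  qed
  have "\<forall>i<n. \<bar>f z i - z i\<bar> < e"
  proof (intro allI impI)
    fix i assume i: "i < n"
    obtain r s where rs: "\<forall>j<n. q j \<le> r j \<and> r j \<le> q j + 1" "\<forall>j<n. q j \<le> s j \<and> s j \<le> q j + 1"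
      "label r i \<noteq> label s i" using q(2) i by blast
    have near: "\<bar>f (pt x) i - f z i\<bar> < e/2" "\<bar>pt x i - z i\<bar> < \<delta>"
      if "\<forall>j<n. q j \<le> x j \<and> x j \<le> q j + 1" for x
    proof -
      have "\<forall>j<n. \<bar>pt x j - z j\<bar> < d" using close[OF that] \<delta> by (meson less_le_trans)
      then show "\<bar>f (pt x) i - f z i\<bar> < e/2" using d(2)[OF ptC[OF rC[OF that]] zC] i by blast
      show "\<bar>pt x i - z i\<bar> < \<delta>" using close[OF that i] .
    qed
    have key: "\<bar>f z i - z i\<bar> < e" if "label x i = 0" "label y i \<noteq> 0"
      "\<forall>j<n. q j \<le> x j \<and> x j \<le> q j + 1" "\<forall>j<n. q j \<le> y j \<and> y j \<le> q j + 1" for x y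
    proof -
      have a: "pt x i \<le> f (pt x) i" using l0[OF that(1)] .
      have b: "f (pt y) i \<le> pt y i" using l1[OF that(2) rC[OF that(4)] i] .
      show ?thesis using near[OF that(3)] near[OF that(4)] a b \<delta> unfolding abs_less_iff by linarith
    qed
    show "\<bar>f z i - z i\<bar> < e"
    proof (cases "label r i = 0")
      case True then show ?thesis using key rs by auto
    next
      case False then have "label s i = 0" using rs(3) by (auto simp: label_def split: if_splits)
      then show ?thesis using key rs False by auto
    qed
  qed
  then show ?thesis using zC by blast
qed



lemma bolzano_fin:
  fixes X :: "nat \<Rightarrow> 'i \<Rightarrow> real"
  assumes "finite I" "\<forall>k. \<forall>i\<in>I. \<bar>X k i\<bar> \<le> B"
  shows "\<exists>r. strict_mono r \<and> (\<forall>i\<in>I. convergent (\<lambda>k. X (r k) i))"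
  using assms
proof (induction I rule: finite_induct)
  case empty
  then show ?case by (intro exI[of _ id]) (auto simp: strict_mono_def)
next
  case (insert j I)
  have "\<forall>k. \<forall>i\<in>I. \<bar>X k i\<bar> \<le> B" using insert.prems by auto
  then obtain r where r: "strict_mono r" "\<forall>i\<in>I. convergent (\<lambda>k. X (r k) i)" using insert.IH by blast
  obtain r' where r': "strict_mono r'" "monoseq (\<lambda>k. X (r (r' k)) j)"
    using seq_monosub[of "\<lambda>k. X (r k) j"] by blast
  have "Bseq (\<lambda>k. X (r (r' k)) j)"
    using insert.prems by (intro BseqI'[of _ B]) auto
  then have cj: "convergent (\<lambda>k. X (r (r' k)) j)"
    using Bseq_monoseq_convergent r'(2) by blast
  have "convergent (\<lambda>k. X (r (r' k)) i)" if "i \<in> I" for i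
  proof -
    from r(2) that have "(\<lambda>k. X (r k) i) \<longlonglongrightarrow> lim (\<lambda>k. X (r k) i)"
      using convergent_LIMSEQ_iff by blast
    from LIMSEQ_subseq_LIMSEQ[OF this r'(1)] show ?thesis
      by (auto simp: convergent_def o_def)
  qed
  moreover have "strict_mono (r \<circ> r')" using r(1) r'(1) by (rule strict_mono_o)
  ultimately show ?case using cj by (intro exI[of _ "r \<circ> r'"]) (auto simp: o_def)
qed

definition incube :: "nat \<Rightarrow> (nat \<Rightarrow> real) \<Rightarrow> bool" where
  "incube n x \<longleftrightarrow> (\<forall>i<n. 0 \<le> x i \<and> x i \<le> 1)"

definition seqcont :: "nat \<Rightarrow> ((nat \<Rightarrow> real) \<Rightarrow> nat \<Rightarrow> real) \<Rightarrow> bool" where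
  "seqcont n f \<longleftrightarrow> (\<forall>X x. (\<forall>k. incube n (X k)) \<longrightarrow> incube n x \<longrightarrow> (\<forall>i<n. (\<lambda>k. X k i) \<longlonglongrightarrow> x i)
      \<longrightarrow> (\<forall>i<n. (\<lambda>k. f (X k) i) \<longlonglongrightarrow> f x i))"

lemma seqcontD:
  assumes "seqcont n f" "\<And>k. incube n (X k)" "incube n x" "\<forall>i<n. (\<lambda>k. X k i) \<longlonglongrightarrow> x i"
  shows "\<forall>i<n. (\<lambda>k. f (X k) i) \<longlonglongrightarrow> f x i"
  using assms unfolding seqcont_def by blast

lemma cube_limit:
  assumes "\<And>k. incube n (X k)" "strict_mono r" "\<forall>i\<in>{..<n}. convergent (\<lambda>k. X (r k) i)"
  defines "x \<equiv> (\<lambda>i. if i < n then lim (\<lambda>k. X (r k) i) else 0)"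
  shows "incube n x" "\<forall>i<n. (\<lambda>k. X (r k) i) \<longlonglongrightarrow> x i"
proof -
  show lim: "\<forall>i<n. (\<lambda>k. X (r k) i) \<longlonglongrightarrow> x i"
    using assms(3) by (auto simp: x_def convergent_LIMSEQ_iff)
  show "incube n x" unfolding incube_def
  proof (intro allI impI conjI)
    fix i assume i: "i < n"
    have b: "0 \<le> X (r k) i" "X (r k) i \<le> 1" for k using assms(1)[of "r k"] i by (auto simp: incube_def)
    show "0 \<le> x i" using LIMSEQ_le_const[OF lim[rule_format, OF i]] b by auto
    show "x i \<le> 1" using LIMSEQ_le_const2[OF lim[rule_format, OF i]] b by auto
  qed
qed

lemma seqcont_uc:
  assumes sc: "seqcont n f"
  shows "\<forall>e>0. \<exists>d>0. \<forall>x y. (\<forall>i<n. 0 \<le> x i \<and> x i \<le> 1) \<longrightarrow> (\<forall>i<n. 0 \<le> y i \<and> y i \<le> 1) \<longrightarrow>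
              (\<forall>i<n. \<bar>x i - y i\<bar> < d) \<longrightarrow> (\<forall>i<n. \<bar>f x i - f y i\<bar> < e)"
proof (intro allI impI)
  fix e :: real assume e: "e > 0"
  show "\<exists>d>0. \<forall>x y. (\<forall>i<n. 0 \<le> x i \<and> x i \<le> 1) \<longrightarrow> (\<forall>i<n. 0 \<le> y i \<and> y i \<le> 1) \<longrightarrow>
              (\<forall>i<n. \<bar>x i - y i\<bar> < d) \<longrightarrow> (\<forall>i<n. \<bar>f x i - f y i\<bar> < e)"
  proof (rule ccontr)
  assume nd: "\<not> (\<exists>d>0. \<forall>x y. (\<forall>i<n. 0 \<le> x i \<and> x i \<le> 1) \<longrightarrow> (\<forall>i<n. 0 \<le> y i \<and> y i \<le> 1) \<longrightarrow>
              (\<forall>i<n. \<bar>x i - y i\<bar> < d) \<longrightarrow> (\<forall>i<n. \<bar>f x i - f y i\<bar> < e))"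
  have "\<exists>x y. incube n x \<and> incube n y \<and>
              (\<forall>i<n. \<bar>x i - y i\<bar> < 1 / Suc k) \<and> (\<exists>i<n. \<not> \<bar>f x i - f y i\<bar> < e)" for k
  proof -
    have "\<not> (\<forall>x y. (\<forall>i<n. 0 \<le> x i \<and> x i \<le> 1) \<longrightarrow> (\<forall>i<n. 0 \<le> y i \<and> y i \<le> 1) \<longrightarrow>
              (\<forall>i<n. \<bar>x i - y i\<bar> < 1 / Suc k) \<longrightarrow> (\<forall>i<n. \<bar>f x i - f y i\<bar> < e))"
      using nd by (metis of_nat_0_less_iff zero_less_Suc zero_less_divide_1_iff)
    then show ?thesis unfolding incube_def by blast
  qed
  then have "\<forall>k. \<exists>x. \<exists>y. incube n x \<and> incube n y \<and>
              (\<forall>i<n. \<bar>x i - y i\<bar> < 1 / Suc k) \<and> (\<exists>i<n. \<not> \<bar>f x i - f y i\<bar> < e)" by blast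
  then obtain X where "\<forall>k. \<exists>y. incube n (X k) \<and> incube n y \<and>
              (\<forall>i<n. \<bar>X k i - y i\<bar> < 1 / Suc k) \<and> (\<exists>i<n. \<not> \<bar>f (X k) i - f y i\<bar> < e)"
    by (rule choice[THEN exE])
  then obtain Y where "\<forall>k. incube n (X k) \<and> incube n (Y k) \<and>
              (\<forall>i<n. \<bar>X k i - Y k i\<bar> < 1 / Suc k) \<and> (\<exists>i<n. \<not> \<bar>f (X k) i - f (Y k) i\<bar> < e)"
    by (rule choice[THEN exE])
  then have XY: "\<And>k. incube n (X k)" "\<And>k. incube n (Y k)"
     "\<And>k i. i < n \<Longrightarrow> \<bar>X k i - Y k i\<bar> < 1 / Suc k" "\<And>k. \<exists>i<n. \<not> \<bar>f (X k) i - f (Y k) i\<bar> < e"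
    by auto
  obtain r where r: "strict_mono r" "\<forall>i\<in>{..<n}. convergent (\<lambda>k. X (r k) i)"
    using bolzano_fin[of "{..<n}" X 1] XY(1) by (auto simp: incube_def)
  define x where "x = (\<lambda>i. if i < n then lim (\<lambda>k. X (r k) i) else 0)"
  have xC: "incube n x" and xl: "\<forall>i<n. (\<lambda>k. X (r k) i) \<longlonglongrightarrow> x i"
    using cube_limit[OF XY(1) r] unfolding x_def by auto
  have yl: "\<forall>i<n. (\<lambda>k. Y (r k) i) \<longlonglongrightarrow> x i"
  proof (intro allI impI)
    fix i assume i: "i < n"
    have "(\<lambda>k. X (r k) i - Y (r k) i) \<longlonglongrightarrow> 0"
    proof (rule Lim_null_comparison[of _ "\<lambda>k. 1 / Suc k"])
      show "\<forall>\<^sub>F k in sequentially. norm (X (r k) i - Y (r k) i) \<le> 1 / real (Suc k)"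
      proof (rule always_eventually, rule allI)
        fix k
        have "\<bar>X (r k) i - Y (r k) i\<bar> < 1 / Suc (r k)" using XY(3) i by blast
        moreover have "1 / real (Suc (r k)) \<le> 1 / Suc k"
          using seq_suble[OF r(1), of k] by (simp add: frac_le)
        ultimately show "norm (X (r k) i - Y (r k) i) \<le> 1 / real (Suc k)" by simp
      qed
      show "(\<lambda>k. 1 / real (Suc k)) \<longlonglongrightarrow> 0" using LIMSEQ_inverse_real_of_nat by (simp add: inverse_eq_divide)
    qed
    from tendsto_diff[OF xl[rule_format, OF i] this] show "(\<lambda>k. Y (r k) i) \<longlonglongrightarrow> x i" by simp
  qed
  have fx: "\<forall>i<n. (\<lambda>k. f (X (r k)) i) \<longlonglongrightarrow> f x i"
    by (rule seqcontD[OF sc XY(1) xC xl])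
  have fy: "\<forall>i<n. (\<lambda>k. f (Y (r k)) i) \<longlonglongrightarrow> f x i"
    by (rule seqcontD[OF sc XY(2) xC yl])
  have "\<forall>i\<in>{..<n}. \<forall>\<^sub>F k in sequentially. \<bar>f (X (r k)) i - f (Y (r k)) i\<bar> < e"
  proof
    fix i assume "i \<in> {..<n}"
    then have "(\<lambda>k. f (X (r k)) i - f (Y (r k)) i) \<longlonglongrightarrow> 0"
      using tendsto_diff[OF fx[rule_format] fy[rule_format]] by fastforce
    then show "\<forall>\<^sub>F k in sequentially. \<bar>f (X (r k)) i - f (Y (r k)) i\<bar> < e"
      using e by (auto dest: order_tendstoD(2) tendsto_rabs_zero)
  qed
  then have "\<forall>\<^sub>F k in sequentially. \<forall>i\<in>{..<n}. \<bar>f (X (r k)) i - f (Y (r k)) i\<bar> < e"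
    by (simp add: eventually_ball_finite)
  then obtain k where "\<forall>i<n. \<bar>f (X (r k)) i - f (Y (r k)) i\<bar> < e"
    by (auto simp: eventually_sequentially)
  then show False using XY(4)[of "r k"] by blast
  qed
qed

lemma cube_fixpoint:
  assumes fC: "\<And>x. incube n x \<Longrightarrow> incube n (f x)" and sc: "seqcont n f"
  shows "\<exists>x. incube n x \<and> (\<forall>i<n. f x i = x i)"
proof -
  have "\<forall>k. \<exists>x. (\<forall>i<n. 0 \<le> x i \<and> x i \<le> 1) \<and> (\<forall>i<n. \<bar>f x i - x i\<bar> < 1 / Suc k)"
    using approx_fp[of n f] fC seqcont_uc[OF sc] unfolding incube_def by auto
  then obtain X where "\<forall>k. (\<forall>i<n. 0 \<le> X k i \<and> X k i \<le> 1) \<and> (\<forall>i<n. \<bar>f (X k) i - X k i\<bar> < 1 / Suc k)"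
    by (rule choice[THEN exE])
  then have X: "\<And>k. incube n (X k)" "\<And>k i. i < n \<Longrightarrow> \<bar>f (X k) i - X k i\<bar> < 1 / Suc k"
    unfolding incube_def by auto
  obtain r where r: "strict_mono r" "\<forall>i\<in>{..<n}. convergent (\<lambda>k. X (r k) i)"
    using bolzano_fin[of "{..<n}" X 1] X(1) by (auto simp: incube_def)
  define x where "x = (\<lambda>i. if i < n then lim (\<lambda>k. X (r k) i) else 0)"
  have xC: "incube n x" and xl: "\<forall>i<n. (\<lambda>k. X (r k) i) \<longlonglongrightarrow> x i"
    using cube_limit[OF X(1) r] unfolding x_def by auto
  have fx: "\<forall>i<n. (\<lambda>k. f (X (r k)) i) \<longlonglongrightarrow> f x i"
    by (rule seqcontD[OF sc X(1) xC xl])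
  have "\<forall>i<n. f x i = x i"
  proof (intro allI impI)
    fix i assume i: "i < n"
    have "(\<lambda>k. f (X (r k)) i - X (r k) i) \<longlonglongrightarrow> 0"
    proof (rule Lim_null_comparison[of _ "\<lambda>k. 1 / Suc k"])
      show "\<forall>\<^sub>F k in sequentially. norm (f (X (r k)) i - X (r k) i) \<le> 1 / real (Suc k)"
      proof (rule always_eventually, rule allI)
        fix k
        have "\<bar>f (X (r k)) i - X (r k) i\<bar> < 1 / Suc (r k)" using X(2) i by blast
        moreover have "1 / real (Suc (r k)) \<le> 1 / Suc k"
          using seq_suble[OF r(1), of k] by (simp add: frac_le)
        ultimately show "norm (f (X (r k)) i - X (r k) i) \<le> 1 / real (Suc k)" by simp
      qed
      show "(\<lambda>k. 1 / real (Suc k)) \<longlonglongrightarrow> 0" using LIMSEQ_inverse_real_of_nat by (simp add: inverse_eq_divide)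
    qed
    moreover have "(\<lambda>k. f (X (r k)) i - X (r k) i) \<longlonglongrightarrow> f x i - x i"
      using fx xl i by (intro tendsto_diff) auto
    ultimately show "f x i = x i" using LIMSEQ_unique by fastforce
  qed
  then show ?thesis using xC by blast
qed



definition gprof :: "'k set \<Rightarrow> ('k \<Rightarrow> 'b set) \<Rightarrow> ('k \<Rightarrow> 'b \<Rightarrow> real) \<Rightarrow> bool" where
  "gprof K B P \<longleftrightarrow> (\<forall>k\<in>K. mixed_strategy (B k) (P k)) \<and> (\<forall>k. k \<notin> K \<longrightarrow> P k = (\<lambda>b. 0))"

definition pure :: "'b \<Rightarrow> 'b \<Rightarrow> real" where "pure b = (\<lambda>c. if c = b then 1 else 0)"

lemma mixed_pure: "finite Bk \<Longrightarrow> b \<in> Bk \<Longrightarrow> mixed_strategy Bk (pure b)"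
  by (auto simp: mixed_strategy_def pure_def)

lemma mixed_bounds: "mixed_strategy Bk t \<Longrightarrow> finite Bk \<Longrightarrow> 0 \<le> t b \<and> t b \<le> 1"
proof (cases "b \<in> Bk")
  case True
  assume m: "mixed_strategy Bk t" and f: "finite Bk"
  have "t b \<le> (\<Sum>a\<in>Bk. t a)" using m f True by (intro member_le_sum) (auto simp: mixed_strategy_def)
  then show ?thesis using m True by (auto simp: mixed_strategy_def)
next
  case False
  then show "mixed_strategy Bk t \<Longrightarrow> finite Bk \<Longrightarrow> 0 \<le> t b \<and> t b \<le> 1" by (auto simp: mixed_strategy_def)
qed

lemma gprof_upd: "gprof K B P \<Longrightarrow> k \<in> K \<Longrightarrow> mixed_strategy (B k) t \<Longrightarrow> gprof K B (P(k:=t))"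
  by (auto simp: gprof_def)

lemma nash_exists:
  fixes K :: "'k set" and B :: "'k \<Rightarrow> 'b set" and u :: "'k \<Rightarrow> ('k \<Rightarrow> 'b \<Rightarrow> real) \<Rightarrow> real"
  assumes finK: "finite K" and finB: "\<forall>k\<in>K. finite (B k) \<and> B k \<noteq> {}"
  and lin: "\<forall>k\<in>K. \<forall>P t. gprof K B P \<longrightarrow> mixed_strategy (B k) t \<longrightarrow>
              u k (P(k:=t)) = (\<Sum>b\<in>B k. t b * u k (P(k := pure b)))"
  and cont: "\<forall>k\<in>K. \<forall>Ps P. (\<forall>m. gprof K B (Ps m)) \<longrightarrow> gprof K B P \<longrightarrow>
              (\<forall>k'\<in>K. \<forall>b\<in>B k'. (\<lambda>m. Ps m k' b) \<longlonglongrightarrow> P k' b) \<longrightarrow> (\<lambda>m. u k (Ps m)) \<longlonglongrightarrow> u k P"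
  shows "\<exists>P. gprof K B P \<and> (\<forall>k\<in>K. \<forall>t. mixed_strategy (B k) t \<longrightarrow> u k (P(k:=t)) \<le> u k P)"
proof -
  define S where "S = Sigma K B"
  have finS: "finite S" using finK finB by (auto simp: S_def)
  define N where "N = card S"
  obtain e where e: "bij_betw e {0..<N} S" using ex_bij_betw_nat_finite[OF finS] N_def by blast
  define ei where "ei = inv_into {0..<N} e"
  have ei1: "ei (k,b) < N" "e (ei (k,b)) = (k,b)" if "k \<in> K" "b \<in> B k" for k b
  proof -
    have kb: "(k,b) \<in> S" using that by (auto simp: S_def)
    show "e (ei (k,b)) = (k,b)" using e kb unfolding ei_def bij_betw_def by (simp add: f_inv_into_f)
    show "ei (k,b) < N" using e kb unfolding ei_def bij_betw_def by (metis atLeastLessThan_iff inv_into_into)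
  qed
  have e1: "fst (e i) \<in> K" "snd (e i) \<in> B (fst (e i))" if "i < N" for i
  proof -
    have "i \<in> {0..<N}" using that by simp
    then have "e i \<in> e ` {0..<N}" by blast
    then have "e i \<in> Sigma K B" using e unfolding bij_betw_def S_def by simp
    then show "fst (e i) \<in> K" "snd (e i) \<in> B (fst (e i))" by (cases "e i", auto)+
  qed
  have cardpos: "0 < card (B k)" if "k \<in> K" for k using finB that by (simp add: card_gt_0_iff)
  define dec where "dec x k b = x (ei (k,b))" for x :: "nat \<Rightarrow> real" and k b
  define ssum where "ssum x k = (\<Sum>c\<in>B k. dec x k c)" for x k
  define rho where "rho x k b = (if k \<in> K \<and> b \<in> B k then
      (dec x k b + max 0 (1 - ssum x k) / real (card (B k))) / max 1 (ssum x k) else 0)" for x k b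
  define g where "g P k b = max 0 (u k (P(k:=pure b)) - u k P)" for P k b
  define F where "F P k b = (if k \<in> K \<and> b \<in> B k then (P k b + g P k b) / (1 + (\<Sum>c\<in>B k. g P k c)) else 0)"
    for P k b
  define f where "f x i = (if i < N then F (rho x) (fst (e i)) (snd (e i)) else 0)" for x i
  have g0: "0 \<le> g P k b" for P k b by (simp add: g_def)
  have rho_prof: "gprof K B (rho x)" if x: "incube N x" for x
    unfolding gprof_def
  proof (intro conjI ballI allI impI)
    fix k assume k: "k \<in> K"
    have d0: "0 \<le> dec x k b" if "b \<in> B k" for b using x ei1[OF k that] by (auto simp: dec_def incube_def)
    have s0: "0 \<le> ssum x k" unfolding ssum_def using d0 by (simp add: sum_nonneg)
    have M: "0 < max 1 (ssum x k)" by simp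
    show "mixed_strategy (B k) (rho x k)" unfolding mixed_strategy_def
    proof (intro conjI ballI allI impI)
      fix b assume b: "b \<in> B k"
      show "0 \<le> rho x k b" unfolding rho_def using d0[OF b] k b cardpos[OF k] by auto
    next
      have "(\<Sum>b\<in>B k. rho x k b) = (\<Sum>b\<in>B k. (dec x k b + max 0 (1 - ssum x k) / real (card (B k)))) / max 1 (ssum x k)"
        unfolding rho_def using k by (simp add: sum_divide_distrib)
      also have "\<dots> = (ssum x k + max 0 (1 - ssum x k)) / max 1 (ssum x k)"
        using cardpos[OF k] by (simp add: sum.distrib ssum_def)
      also have "\<dots> = 1" by (simp add: max_def)
      finally show "(\<Sum>b\<in>B k. rho x k b) = 1" .
    next
      fix b assume "b \<notin> B k" then show "rho x k b = 0" by (simp add: rho_def)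
    qed
  next
    fix k assume "k \<notin> K" then show "rho x k = (\<lambda>b. 0)" by (auto simp: rho_def)
  qed
  have F_prof: "gprof K B (F P)" if P: "gprof K B P" for P
    unfolding gprof_def
  proof (intro conjI ballI allI impI)
    fix k assume k: "k \<in> K"
    have mk: "mixed_strategy (B k) (P k)" using P k by (auto simp: gprof_def)
    have G0: "0 \<le> (\<Sum>c\<in>B k. g P k c)" using g0 by (simp add: sum_nonneg)
    show "mixed_strategy (B k) (F P k)" unfolding mixed_strategy_def
    proof (intro conjI ballI allI impI)
      fix b assume b: "b \<in> B k"
      have "0 \<le> P k b" using mk b by (auto simp: mixed_strategy_def)
      then show "0 \<le> F P k b" unfolding F_def using k b G0 g0[of P k b] by auto
    next
      have "(\<Sum>b\<in>B k. F P k b) = (\<Sum>b\<in>B k. (P k b + g P k b)) / (1 + (\<Sum>c\<in>B k. g P k c))"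
        unfolding F_def using k by (simp add: sum_divide_distrib)
      also have "\<dots> = 1" using mk G0 by (simp add: sum.distrib mixed_strategy_def)
      finally show "(\<Sum>b\<in>B k. F P k b) = 1" .
    next
      fix b assume "b \<notin> B k" then show "F P k b = 0" by (simp add: F_def)
    qed
  next
    fix k assume "k \<notin> K" then show "F P k = (\<lambda>b. 0)" by (auto simp: F_def)
  qed
  have fC: "incube N (f x)" if "incube N x" for x
    unfolding incube_def
  proof (intro allI impI)
    fix i assume i: "i < N"
    have "mixed_strategy (B (fst (e i))) (F (rho x) (fst (e i)))"
      using F_prof[OF rho_prof[OF that]] e1[OF i] by (auto simp: gprof_def)
    moreover have "finite (B (fst (e i)))" using finB e1[OF i] by blast
    ultimately show "0 \<le> f x i \<and> f x i \<le> 1"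
      using mixed_bounds i by (simp add: f_def)
  qed
  have sc: "seqcont N f" unfolding seqcont_def
  proof (intro allI impI)
    fix Xs x i assume Xs: "\<forall>k. incube N (Xs k)" and x: "incube N x"
      and lim: "\<forall>i<N. (\<lambda>k. Xs k i) \<longlonglongrightarrow> x i" and i: "i < N"
    have Pm: "gprof K B (rho (Xs m))" for m using rho_prof Xs by blast
    have P: "gprof K B (rho x)" using rho_prof x by blast
    have ld: "(\<lambda>m. dec (Xs m) k b) \<longlonglongrightarrow> dec x k b" if "k \<in> K" "b \<in> B k" for k b
      unfolding dec_def using lim ei1[OF that] by blast
    have ls: "(\<lambda>m. ssum (Xs m) k) \<longlonglongrightarrow> ssum x k" if "k \<in> K" for k
      unfolding ssum_def using ld that by (intro tendsto_sum) auto
    have lr: "\<forall>k\<in>K. \<forall>b\<in>B k. (\<lambda>m. rho (Xs m) k b) \<longlonglongrightarrow> rho x k b"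
    proof (intro ballI)
      fix k b assume kb: "k \<in> K" "b \<in> B k"
      show "(\<lambda>m. rho (Xs m) k b) \<longlonglongrightarrow> rho x k b"
        unfolding rho_def using kb cardpos[OF kb(1)]
        by (auto intro!: tendsto_intros ld ls)
    qed
    have lu: "(\<lambda>m. u k (rho (Xs m))) \<longlonglongrightarrow> u k (rho x)" if "k \<in> K" for k
      using cont[rule_format, OF that, where Ps="\<lambda>m. rho (Xs m)" and P="rho x"] Pm P lr by blast
    have lup: "(\<lambda>m. u k ((rho (Xs m))(k := pure b))) \<longlonglongrightarrow> u k ((rho x)(k := pure b))"
      if "k \<in> K" "b \<in> B k" for k b
    proof -
      have "finite (B k)" using finB that(1) by blast
      have mp: "mixed_strategy (B k) (pure b)" by (rule mixed_pure[OF \<open>finite (B k)\<close> that(2)])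
      have "\<forall>k'\<in>K. \<forall>b'\<in>B k'. (\<lambda>m. ((rho (Xs m))(k := pure b)) k' b') \<longlonglongrightarrow> ((rho x)(k := pure b)) k' b'"
        using lr by auto
      moreover have "\<forall>m. gprof K B ((rho (Xs m))(k := pure b))" using gprof_upd[OF Pm that(1) mp] by blast
      moreover have "gprof K B ((rho x)(k := pure b))" using gprof_upd[OF P that(1) mp] .
      ultimately show ?thesis
        using cont[rule_format, OF that(1), where Ps="\<lambda>m. (rho (Xs m))(k := pure b)" and P="(rho x)(k := pure b)"]
        by blast
    qed
    have lg: "(\<lambda>m. g (rho (Xs m)) k b) \<longlonglongrightarrow> g (rho x) k b" if "k \<in> K" "b \<in> B k" for k b
      unfolding g_def using lu lup that by (intro tendsto_intros) auto
    have lF: "(\<lambda>m. F (rho (Xs m)) k b) \<longlonglongrightarrow> F (rho x) k b" if "k \<in> K" "b \<in> B k" for k b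
    proof -
      have "(\<lambda>m. (rho (Xs m) k b + g (rho (Xs m)) k b) / (1 + (\<Sum>c\<in>B k. g (rho (Xs m)) k c)))
          \<longlonglongrightarrow> (rho x k b + g (rho x) k b) / (1 + (\<Sum>c\<in>B k. g (rho x) k c))"
      proof (intro tendsto_intros)
        show "(\<lambda>m. rho (Xs m) k b) \<longlonglongrightarrow> rho x k b" using lr that by blast
        show "(\<lambda>m. g (rho (Xs m)) k b) \<longlonglongrightarrow> g (rho x) k b" using lg that by blast
        show "\<And>c. c \<in> B k \<Longrightarrow> (\<lambda>m. g (rho (Xs m)) k c) \<longlonglongrightarrow> g (rho x) k c" using lg that by blast
        have "0 \<le> (\<Sum>c\<in>B k. g (rho x) k c)" using g0 by (simp add: sum_nonneg)
        then show "1 + (\<Sum>c\<in>B k. g (rho x) k c) \<noteq> 0" by linarith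
      qed
      then show ?thesis unfolding F_def using that by simp
    qed
    show "(\<lambda>k. f (Xs k) i) \<longlonglongrightarrow> f x i"
      unfolding f_def using i lF e1[OF i] by simp
  qed
  obtain x where x: "incube N x" "\<forall>i<N. f x i = x i" using cube_fixpoint[OF fC sc] by blast
  define P where "P = rho x"
  have P: "gprof K B P" using rho_prof[OF x(1)] by (simp add: P_def)
  have FP: "F P = P"
  proof (intro ext)
    fix k b
    show "F P k b = P k b"
    proof (cases "k \<in> K \<and> b \<in> B k")
      case True
      have dq: "dec x k c = F P k c" if "c \<in> B k" for c
      proof -
        have "dec x k c = x (ei (k,c))" by (simp add: dec_def)
        also have "\<dots> = f x (ei (k,c))" using x(2) ei1[OF _ that] True by auto
        also have "\<dots> = F P k c" using ei1[OF _ that] True by (simp add: f_def P_def)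
        finally show ?thesis .
      qed
      have "ssum x k = (\<Sum>c\<in>B k. F P k c)" unfolding ssum_def using dq by simp
      also have "\<dots> = 1" using F_prof[OF P] True by (auto simp: gprof_def mixed_strategy_def)
      finally have "ssum x k = 1" .
      then have "P k b = dec x k b" using True by (simp add: P_def rho_def)
      then show ?thesis using dq True by simp
    next
      case False
      then show ?thesis by (auto simp: F_def P_def rho_def)
    qed
  qed
  have "\<forall>k\<in>K. \<forall>t. mixed_strategy (B k) t \<longrightarrow> u k (P(k:=t)) \<le> u k P"
  proof (intro ballI allI impI)
    fix k t assume k: "k \<in> K" and t: "mixed_strategy (B k) t"
    have mk: "mixed_strategy (B k) (P k)" using P k by (auto simp: gprof_def)
    have fin: "finite (B k)" using finB k by auto
    define v where "v = u k P"
    define w where "w b = u k (P(k := pure b))" for b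
    have vsum: "v = (\<Sum>b\<in>B k. P k b * w b)"
      using lin[rule_format, OF k P mk] unfolding v_def w_def by simp
    have "\<exists>b\<in>B k. 0 < P k b \<and> w b \<le> v"
    proof (rule ccontr)
      assume "\<not> ?thesis"
      then have h: "\<And>b. b \<in> B k \<Longrightarrow> 0 < P k b \<Longrightarrow> v < w b" by force
      have nn: "\<And>b. b \<in> B k \<Longrightarrow> 0 \<le> P k b" using mk by (auto simp: mixed_strategy_def)
      obtain b0 where b0: "b0 \<in> B k" "0 < P k b0"
      proof (rule ccontr)
        assume "\<not> thesis"
        then have "\<And>b. b \<in> B k \<Longrightarrow> P k b = 0" using that nn by force
        then have "(\<Sum>b\<in>B k. P k b) = 0" by simp
        then show False using mk by (simp add: mixed_strategy_def)
      qed
      have "(\<Sum>b\<in>B k. P k b * v) < (\<Sum>b\<in>B k. P k b * w b)"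
      proof (rule sum_strict_mono_ex1[OF fin])
        show "\<forall>b\<in>B k. P k b * v \<le> P k b * w b"
        proof
          fix b assume b: "b \<in> B k"
          show "P k b * v \<le> P k b * w b"
          proof (cases "P k b = 0")
            case False then show ?thesis using h[OF b] nn[OF b] by (simp add: less_le)
          qed simp
        qed
        show "\<exists>b\<in>B k. P k b * v < P k b * w b" using b0 h[OF b0] mult_strict_left_mono by blast
      qed
      also have "\<dots> = v" using vsum by simp
      finally show False using mk by (simp add: sum_distrib_right[symmetric] mixed_strategy_def)
    qed
    then obtain b where b: "b \<in> B k" "0 < P k b" "w b \<le> v" by blast
    have gb: "g P k b = 0" using b(3) by (simp add: g_def v_def w_def)
    have G0: "0 \<le> (\<Sum>c\<in>B k. g P k c)" using g0 by (simp add: sum_nonneg)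
    have "P k b = P k b / (1 + (\<Sum>c\<in>B k. g P k c))"
      using FP[THEN fun_cong, of k, THEN fun_cong, of b] k b gb by (simp add: F_def)
    then have "P k b * (1 + (\<Sum>c\<in>B k. g P k c)) = P k b" using G0 by (simp add: eq_divide_eq)
    then have "P k b * (\<Sum>c\<in>B k. g P k c) = 0" by (simp add: algebra_simps)
    then have "(\<Sum>c\<in>B k. g P k c) = 0" using b(2) by simp
    then have gz: "\<And>c. c \<in> B k \<Longrightarrow> g P k c = 0" using sum_nonneg_eq_0_iff[OF fin] g0 by blast
    have wv: "\<And>c. c \<in> B k \<Longrightarrow> w c \<le> v"
    proof -
      fix c assume "c \<in> B k"
      then have "max 0 (w c - v) = 0" using gz unfolding g_def w_def v_def by blast
      then show "w c \<le> v" by linarith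
    qed
    have "u k (P(k:=t)) = (\<Sum>c\<in>B k. t c * w c)" using lin[rule_format, OF k P t] unfolding w_def by simp
    also have "\<dots> \<le> (\<Sum>c\<in>B k. t c * v)"
      using t wv by (intro sum_mono mult_left_mono) (auto simp: mixed_strategy_def)
    also have "\<dots> = v" using t by (simp add: sum_distrib_right[symmetric] mixed_strategy_def)
    finally show "u k (P(k:=t)) \<le> u k P" by (simp add: v_def)
  qed
  then show ?thesis using P by blast
qed



lemma prod_upd_split:
  fixes n i :: nat
  assumes "i < n"
  shows "(\<Prod>j<n. (x(i:=y)) j (a j)) = y (a i) * (\<Prod>j\<in>{..<n}-{i}. x j (a j))"
proof -
  have "(\<Prod>j<n. (x(i:=y)) j (a j)) = (x(i:=y)) i (a i) * (\<Prod>j\<in>{..<n}-{i}. (x(i:=y)) j (a j))"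
    using assms by (intro prod.remove) auto
  also have "(\<Prod>j\<in>{..<n}-{i}. (x(i:=y)) j (a j)) = (\<Prod>j\<in>{..<n}-{i}. x j (a j))"
    by (intro prod.cong) auto
  finally show ?thesis by simp
qed

lemma mlext_lin:
  assumes "i < n" and finA: "finite (A i)"
  shows "mlext n A \<theta> (x(i:=t)) = (\<Sum>b\<in>A i. t b * mlext n A \<theta> (x(i := pure b)))"
proof -
  define R where "R a = (\<Prod>j\<in>{..<n}-{i}. x j (a j)) * \<theta> a" for a
  have L: "mlext n A \<theta> (x(i:=y)) = (\<Sum>a\<in>PiE {..<n} A. y (a i) * R a)" for y
    unfolding mlext_def R_def prod_upd_split[OF assms(1)] by (simp add: mult.assoc)
  have "(\<Sum>b\<in>A i. t b * mlext n A \<theta> (x(i := pure b))) = (\<Sum>b\<in>A i. \<Sum>a\<in>PiE {..<n} A. t b * (pure b (a i) * R a))"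
    unfolding L by (simp add: sum_distrib_left)
  also have "\<dots> = (\<Sum>a\<in>PiE {..<n} A. \<Sum>b\<in>A i. t b * (pure b (a i) * R a))"
    by (rule sum.swap)
  also have "\<dots> = (\<Sum>a\<in>PiE {..<n} A. t (a i) * R a)"
  proof (intro sum.cong refl)
    fix a assume a: "a \<in> PiE {..<n} A"
    then have ai: "a i \<in> A i" using assms(1) by auto
    have "(\<Sum>b\<in>A i. t b * (pure b (a i) * R a)) = (\<Sum>b\<in>A i. if a i = b then t b * R a else 0)"
      by (intro sum.cong) (auto simp: pure_def)
    also have "\<dots> = t (a i) * R a" using ai finA by (simp add: sum.delta)
    finally show "(\<Sum>b\<in>A i. t b * (pure b (a i) * R a)) = t (a i) * R a" .
  qed
  finally show ?thesis using L by simp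
qed

lemma mlext_tendsto:
  assumes "\<forall>j<n. \<forall>a\<in>A j. (\<lambda>k. X k j a) \<longlonglongrightarrow> x j a"
  shows "(\<lambda>k. mlext n A \<theta> (X k)) \<longlonglongrightarrow> mlext n A \<theta> x"
  unfolding mlext_def
proof (intro tendsto_sum tendsto_mult tendsto_const tendsto_prod)
  fix a j assume "a \<in> PiE {..<n} A" "j \<in> {..<n}"
  then show "(\<lambda>k. X k j (a j)) \<longlonglongrightarrow> x j (a j)" using assms by auto
qed

lemma mlext_cong:
  assumes "\<forall>j<n. \<forall>a\<in>A j. x j a = y j a"
  shows "mlext n A \<theta> x = mlext n A \<theta> y"
  unfolding mlext_def
proof (intro sum.cong refl arg_cong2[where f="(*)"] prod.cong)
  fix a j assume "a \<in> PiE {..<n} A" "j \<in> {..<n}"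
  then show "x j (a j) = y j (a j)" using assms by auto
qed

lemma mlext_cong_type:
  assumes "\<forall>a\<in>PiE {..<n} A. \<theta>1 a = \<theta>2 a"
  shows "mlext n A \<theta>1 = mlext n A \<theta>2"
  using assms unfolding mlext_def by (intro ext sum.cong refl) auto

lemma exp_util_eq:
  assumes i: "i < n" and fin: "\<forall>j<n. finite (supp (\<mu> j))"
  shows "exp_util n A \<mu> s i \<theta> t = mlext n A \<theta> ((aggregate \<mu> s)(i := t))"
proof -
  define S where "S = {..<n} - {i}"
  have finS: "finite S" by (simp add: S_def)
  have finsupp: "\<And>j. j \<in> S \<Longrightarrow> finite (supp (\<mu> j))" using fin by (auto simp: S_def)
  have "exp_util n A \<mu> s i \<theta> t =
     (\<Sum>\<theta>'\<in>PiE S (\<lambda>j. supp (\<mu> j)). \<Sum>a\<in>PiE {..<n} A.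
        (\<Prod>j\<in>S. \<mu> j (\<theta>' j)) * (t (a i) * (\<Prod>j\<in>S. s j (\<theta>' j) (a j)) * \<theta> a))"
    unfolding exp_util_def mlext_def S_def prod_upd_split[OF i]
    by (simp add: sum_distrib_left)
  also have "\<dots> = (\<Sum>a\<in>PiE {..<n} A. \<Sum>\<theta>'\<in>PiE S (\<lambda>j. supp (\<mu> j)).
        (t (a i) * \<theta> a) * (\<Prod>j\<in>S. \<mu> j (\<theta>' j) * s j (\<theta>' j) (a j)))"
    by (subst sum.swap) (simp add: prod.distrib mult_ac)
  also have "\<dots> = (\<Sum>a\<in>PiE {..<n} A. (t (a i) * \<theta> a) * (\<Prod>j\<in>S. \<Sum>c\<in>supp (\<mu> j). \<mu> j c * s j c (a j)))"
    by (simp add: sum_distrib_left[symmetric] prod_sum_PiE[OF finS finsupp])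
  also have "\<dots> = mlext n A \<theta> ((aggregate \<mu> s)(i := t))"
    unfolding mlext_def prod_upd_split[OF i] S_def[symmetric]
    by (simp add: aggregate_def mult_ac)
  finally show ?thesis .
qed



definition resid :: "nat \<Rightarrow> (nat \<Rightarrow> 'a set) \<Rightarrow> (nat \<Rightarrow> 'a ptype) \<Rightarrow> nat \<Rightarrow> 'a ptype" where
  "resid n A \<pi> i = (\<lambda>a. if a \<in> PiE {..<n} A then \<pi> i a else 0)"

definition mu0 :: "nat \<Rightarrow> (nat \<Rightarrow> 'a set) \<Rightarrow> (nat \<Rightarrow> 'a ptype) \<Rightarrow> nat \<Rightarrow> 'a ptype \<Rightarrow> real" where
  "mu0 n A \<pi> i \<theta> = (if \<theta> = resid n A \<pi> i then 1 else 0)"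

definition agg :: "nat set \<Rightarrow> (nat \<Rightarrow> real) \<Rightarrow> (nat \<Rightarrow> 'a \<Rightarrow> real) \<Rightarrow> (nat \<Rightarrow> 'a \<Rightarrow> real) \<Rightarrow> nat \<Rightarrow> 'a \<Rightarrow> real" where
  "agg J \<epsilon> r m i = (if i \<in> J then (\<lambda>a. (1 - \<epsilon> i) * r i a + \<epsilon> i * m i a) else r i)"

definition mkS :: "nat set \<Rightarrow> (nat \<Rightarrow> 'a ptype) \<Rightarrow> (nat \<Rightarrow> 'a \<Rightarrow> real) \<Rightarrow> (nat \<Rightarrow> 'a \<Rightarrow> real) \<Rightarrow> nat \<Rightarrow> 'a ptype \<Rightarrow> 'a \<Rightarrow> real" where
  "mkS J \<theta>m r m i \<theta> = (if i \<in> J \<and> \<theta> = \<theta>m i then m i else r i)"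

definition goodeq :: "nat \<Rightarrow> (nat \<Rightarrow> 'a set) \<Rightarrow> (nat \<Rightarrow> 'a ptype) \<Rightarrow> nat set \<Rightarrow> (nat \<Rightarrow> 'a ptype) \<Rightarrow> (nat \<Rightarrow> real)
    \<Rightarrow> (nat \<Rightarrow> 'a \<Rightarrow> real) \<Rightarrow> (nat \<Rightarrow> 'a \<Rightarrow> real) \<Rightarrow> bool" where
  "goodeq n A \<pi> J \<theta>m \<epsilon> r m \<longleftrightarrow>
    (\<forall>i<n. mixed_strategy (A i) (r i) \<and> (\<forall>t. mixed_strategy (A i) t \<longrightarrow>
        mlext n A (\<pi> i) ((agg J \<epsilon> r m)(i:=t)) \<le> mlext n A (\<pi> i) ((agg J \<epsilon> r m)(i := r i)))) \<and>
    (\<forall>j\<in>J. mixed_strategy (A j) (m j) \<and> (\<forall>t. mixed_strategy (A j) t \<longrightarrow>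
        mlext n A (\<theta>m j) ((agg J \<epsilon> r m)(j:=t)) \<le> mlext n A (\<theta>m j) ((agg J \<epsilon> r m)(j := m j))))"

lemma supp_mu0: "supp (mu0 n A \<pi> i) = {resid n A \<pi> i}"
  by (auto simp: supp_def mu0_def)

lemma mlext_resid: "mlext n A (resid n A \<pi> i) = mlext n A (\<pi> i)"
  by (rule mlext_cong_type) (simp add: resid_def)

lemma resid_types: "resid n A \<pi> i \<in> types n A"
  by (simp add: resid_def types_def)

locale adm =
  fixes n :: nat and A :: "nat \<Rightarrow> 'a set" and \<pi> :: "nat \<Rightarrow> 'a ptype"
    and J :: "nat set" and \<theta>m :: "nat \<Rightarrow> 'a ptype" and \<epsilon> :: "nat \<Rightarrow> real"
  assumes J: "J \<subseteq> {..<n}"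
    and tm: "\<forall>j\<in>J. \<theta>m j \<in> types n A - supp (mu0 n A \<pi> j)"
    and eps: "\<forall>j\<in>J. 0 < \<epsilon> j \<and> \<epsilon> j < 1"
    and finA: "\<forall>i<n. finite (A i)"
begin

abbreviation "\<mu>' \<equiv> post_entry (mu0 n A \<pi>) J \<theta>m \<epsilon>"
abbreviation "\<rho> \<equiv> resid n A \<pi>"

lemma tm_ne: "j \<in> J \<Longrightarrow> \<theta>m j \<noteq> \<rho> j"
  using tm by (auto simp: supp_mu0)

lemma mu'_J: "i \<in> J \<Longrightarrow> \<mu>' i \<theta> = (if \<theta> = \<rho> i then 1 - \<epsilon> i else if \<theta> = \<theta>m i then \<epsilon> i else 0)"
  using tm_ne[of i] by (auto simp: post_entry_def mu0_def)

lemma supp_J: "i \<in> J \<Longrightarrow> supp (\<mu>' i) = {\<rho> i, \<theta>m i}"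
  using eps tm_ne[of i] by (auto simp: supp_def mu'_J)

lemma supp_nJ: "i \<notin> J \<Longrightarrow> supp (\<mu>' i) = {\<rho> i}"
  by (auto simp: supp_def post_entry_def mu0_def)

lemma fin_supp: "finite (supp (\<mu>' i))"
  by (cases "i \<in> J") (auto simp: supp_J supp_nJ)

lemma aggregate_post: "aggregate \<mu>' s = agg J \<epsilon> (\<lambda>i. s i (\<rho> i)) (\<lambda>i. s i (\<theta>m i))"
proof (intro ext)
  fix i a
  show "aggregate \<mu>' s i a = agg J \<epsilon> (\<lambda>i. s i (\<rho> i)) (\<lambda>i. s i (\<theta>m i)) i a"
  proof (cases "i \<in> J")
    case True
    then show ?thesis using tm_ne[OF True]
      by (simp add: aggregate_def supp_J agg_def mu'_J)
  next
    case False
    then show ?thesis by (simp add: aggregate_def supp_nJ agg_def post_entry_def mu0_def)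
  qed
qed

lemma exp_util_post: "i < n \<Longrightarrow> exp_util n A \<mu>' s i \<theta> t =
    mlext n A \<theta> ((agg J \<epsilon> (\<lambda>i. s i (\<rho> i)) (\<lambda>i. s i (\<theta>m i)))(i := t))"
  using exp_util_eq[of i n \<mu>' A s \<theta> t] fin_supp by (simp add: aggregate_post)

lemma avg_post: "avg_fitness n A \<pi> \<mu>' s i \<theta> =
    mlext n A (\<pi> i) ((agg J \<epsilon> (\<lambda>i. s i (\<rho> i)) (\<lambda>i. s i (\<theta>m i)))(i := s i \<theta>))"
  by (simp add: avg_fitness_def aggregate_post)

lemma univ_part:
  assumes s: "s \<in> BNE_set n A \<mu>'"
  shows "(\<exists>j\<in>J. \<forall>\<theta>\<in>supp (mu0 n A \<pi> j). avg_fitness n A \<pi> \<mu>' s j \<theta> > avg_fitness n A \<pi> \<mu>' s j (\<theta>m j))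
    \<or> balanced n A \<pi> \<mu>' s"
proof -
  define x where "x = agg J \<epsilon> (\<lambda>i. s i (\<rho> i)) (\<lambda>i. s i (\<theta>m i))"
  have le: "avg_fitness n A \<pi> \<mu>' s j (\<theta>m j) \<le> avg_fitness n A \<pi> \<mu>' s j (\<rho> j)" if j: "j \<in> J" for j
  proof -
    have jn: "j < n" using J j by auto
    have "\<theta>m j \<in> supp (\<mu>' j)" "\<rho> j \<in> supp (\<mu>' j)" using supp_J[OF j] by auto
    then have m: "mixed_strategy (A j) (s j (\<theta>m j))"
      and br: "\<forall>t. mixed_strategy (A j) t \<longrightarrow> exp_util n A \<mu>' s j (\<rho> j) t \<le> exp_util n A \<mu>' s j (\<rho> j) (s j (\<rho> j))"
      using s jn unfolding BNE_set_def by blast+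
    have "exp_util n A \<mu>' s j (\<rho> j) (s j (\<theta>m j)) \<le> exp_util n A \<mu>' s j (\<rho> j) (s j (\<rho> j))"
      using br m by blast
    then show ?thesis using jn by (simp add: exp_util_post avg_post mlext_resid)
  qed
  show ?thesis
  proof (cases "\<exists>j\<in>J. avg_fitness n A \<pi> \<mu>' s j (\<theta>m j) < avg_fitness n A \<pi> \<mu>' s j (\<rho> j)")
    case True
    then show ?thesis by (auto simp: supp_mu0)
  next
    case False
    then have eq: "\<And>j. j \<in> J \<Longrightarrow> avg_fitness n A \<pi> \<mu>' s j (\<theta>m j) = avg_fitness n A \<pi> \<mu>' s j (\<rho> j)"
      using le by (meson order_less_le)
    have "balanced n A \<pi> \<mu>' s"
      unfolding balanced_def
    proof (intro allI impI ballI)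
      fix i \<theta> \<theta>' assume i: "i < n" and th: "\<theta> \<in> supp (\<mu>' i)" "\<theta>' \<in> supp (\<mu>' i)"
      show "avg_fitness n A \<pi> \<mu>' s i \<theta> = avg_fitness n A \<pi> \<mu>' s i \<theta>'"
      proof (cases "i \<in> J")
        case True
        then show ?thesis using th eq[OF True] by (auto simp: supp_J)
      next
        case False
        then show ?thesis using th by (auto simp: supp_nJ)
      qed
    qed
    then show ?thesis by blast
  qed
qed

lemma goodeq_nearby:
  assumes g: "goodeq n A \<pi> J \<theta>m \<epsilon> r m" and d: "\<forall>i<n. strat_dist (A i) (r i) (\<sigma> i) \<le> \<eta>"
  shows "mkS J \<theta>m r m \<in> nearby_BNE n A (mu0 n A \<pi>) \<mu>' (\<lambda>i \<theta>. \<sigma> i) \<eta>"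
proof -
  define s where "s = mkS J \<theta>m r m"
  have sr: "s i (\<rho> i) = r i" for i using tm_ne[of i] by (auto simp: s_def mkS_def)
  have sm: "i \<in> J \<Longrightarrow> s i (\<theta>m i) = m i" for i by (simp add: s_def mkS_def)
  have ag: "agg J \<epsilon> (\<lambda>i. s i (\<rho> i)) (\<lambda>i. s i (\<theta>m i)) = agg J \<epsilon> r m"
    by (intro ext) (auto simp: agg_def sr sm)
  have "s \<in> BNE_set n A \<mu>'"
    unfolding BNE_set_def
  proof (intro CollectI allI impI ballI)
    fix i \<theta>i assume i: "i < n" and th: "\<theta>i \<in> supp (\<mu>' i)"
    have eu: "exp_util n A \<mu>' s i \<theta>i t = mlext n A \<theta>i ((agg J \<epsilon> r m)(i := t))" for t
      using exp_util_post[OF i] ag by simp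
    show "mixed_strategy (A i) (s i \<theta>i) \<and> (\<forall>t. mixed_strategy (A i) t \<longrightarrow>
          exp_util n A \<mu>' s i \<theta>i t \<le> exp_util n A \<mu>' s i \<theta>i (s i \<theta>i))"
    proof (cases "\<theta>i = \<rho> i")
      case True
      then show ?thesis using g i unfolding goodeq_def eu by (simp add: sr mlext_resid)
    next
      case False
      then have iJ: "i \<in> J" and tt: "\<theta>i = \<theta>m i" using th by (cases "i \<in> J", auto simp: supp_J supp_nJ)+
      then show ?thesis using g unfolding goodeq_def eu by (simp add: sm)
    qed
  qed
  then show ?thesis using d unfolding nearby_BNE_def s_def[symmetric] by (simp add: supp_mu0 sr)
qed

end



lemma base_config:
  assumes finA: "\<forall>i<n. finite (A i)" and ne: "nash_eq n A \<pi> \<sigma>"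
  shows "configuration n A (mu0 n A \<pi>) (\<lambda>i \<theta>. \<sigma> i)" "balanced n A \<pi> (mu0 n A \<pi>) (\<lambda>i \<theta>. \<sigma> i)"
    "\<forall>i<n. aggregate (mu0 n A \<pi>) (\<lambda>i \<theta>. \<sigma> i) i = \<sigma> i"
proof -
  have ag: "aggregate (mu0 n A \<pi>) (\<lambda>i \<theta>. \<sigma> i) = \<sigma>"
    by (intro ext) (simp add: aggregate_def supp_mu0 mu0_def)
  then show "\<forall>i<n. aggregate (mu0 n A \<pi>) (\<lambda>i \<theta>. \<sigma> i) i = \<sigma> i" by simp
  have pop: "population n A (mu0 n A \<pi>)"
    unfolding population_def by (auto simp: supp_mu0 resid_types mu0_def)
  have "(\<lambda>i \<theta>. \<sigma> i) \<in> BNE_set n A (mu0 n A \<pi>)"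
    unfolding BNE_set_def
  proof (intro CollectI allI impI ballI conjI)
    fix i \<theta>i assume i: "i < n" and th: "\<theta>i \<in> supp (mu0 n A \<pi> i)"
    then have tr: "\<theta>i = resid n A \<pi> i" by (simp add: supp_mu0)
    show "mixed_strategy (A i) (\<sigma> i)" using ne i by (auto simp: nash_eq_def mixed_profile_def)
    fix t assume t: "mixed_strategy (A i) t"
    have eu: "exp_util n A (mu0 n A \<pi>) (\<lambda>i \<theta>. \<sigma> i) i \<theta>i t' = mlext n A (\<pi> i) (\<sigma>(i := t'))" for t'
      using exp_util_eq[OF i, of "mu0 n A \<pi>" A "\<lambda>i \<theta>. \<sigma> i" \<theta>i t'] tr ag
      by (simp add: supp_mu0 mlext_resid)
    show "exp_util n A (mu0 n A \<pi>) (\<lambda>i \<theta>. \<sigma> i) i \<theta>i t \<le> exp_util n A (mu0 n A \<pi>) (\<lambda>i \<theta>. \<sigma> i) i \<theta>i (\<sigma> i)"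
      unfolding eu using ne i t by (simp add: nash_eq_def)
  qed
  then show "configuration n A (mu0 n A \<pi>) (\<lambda>i \<theta>. \<sigma> i)" using pop by (simp add: configuration_def)
  show "balanced n A \<pi> (mu0 n A \<pi>) (\<lambda>i \<theta>. \<sigma> i)" by (simp add: balanced_def supp_mu0)
qed

definition exist_prop :: "nat \<Rightarrow> (nat \<Rightarrow> 'a set) \<Rightarrow> (nat \<Rightarrow> 'a ptype) \<Rightarrow> (nat \<Rightarrow> 'a \<Rightarrow> real) \<Rightarrow> bool" where
  "exist_prop n A \<pi> \<sigma> \<longleftrightarrow> (\<forall>J \<theta>m \<eta>. J \<noteq> {} \<and> J \<subseteq> {..<n} \<and> (\<forall>j\<in>J. \<theta>m j \<in> types n A - supp (mu0 n A \<pi> j)) \<and> 0 < \<eta> \<longrightarrow>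
     (\<exists>\<eta>b \<epsilon>b. 0 \<le> \<eta>b \<and> \<eta>b < \<eta> \<and> 0 < \<epsilon>b \<and> \<epsilon>b < 1 \<and>
       (\<forall>\<epsilon>. (\<forall>j\<in>J. 0 < \<epsilon> j \<and> \<epsilon> j < \<epsilon>b) \<longrightarrow>
          (\<exists>r m. goodeq n A \<pi> J \<theta>m \<epsilon> r m \<and> (\<forall>i<n. strat_dist (A i) (r i) (\<sigma> i) \<le> \<eta>b)))))"

lemma stable_from_exist:
  assumes finA: "\<forall>i<n. finite (A i)" and ne: "nash_eq n A \<pi> \<sigma>" and ex: "exist_prop n A \<pi> \<sigma>"
  shows "stable_no_obs n A \<pi> \<sigma>"
proof -
  note bc = base_config[OF finA ne]
  have "stable_config n A \<pi> (mu0 n A \<pi>) (\<lambda>i \<theta>. \<sigma> i)"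
    unfolding stable_config_def
  proof (intro conjI bc(1) bc(2) allI impI)
    fix J :: "nat set" and \<theta>m :: "nat \<Rightarrow> 'a ptype" and \<eta> :: real assume h: "J \<noteq> {} \<and> J \<subseteq> {..<n} \<and> (\<forall>j\<in>J. \<theta>m j \<in> types n A - supp (mu0 n A \<pi> j)) \<and> 0 < \<eta>"
    then obtain \<eta>b \<epsilon>b :: real where eb: "0 \<le> \<eta>b" "\<eta>b < \<eta>" "0 < \<epsilon>b" "\<epsilon>b < 1"
      and EX: "\<And>\<epsilon>. (\<forall>j\<in>J. 0 < \<epsilon> j \<and> \<epsilon> j < \<epsilon>b) \<Longrightarrow>
          (\<exists>r m. goodeq n A \<pi> J \<theta>m \<epsilon> r m \<and> (\<forall>i<n. strat_dist (A i) (r i) (\<sigma> i) \<le> \<eta>b))"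
      using ex[unfolded exist_prop_def, rule_format, OF h] by blast
    have finJ: "finite J" using h finite_subset by blast
    show "\<exists>\<eta>b \<epsilon>b. 0 \<le> \<eta>b \<and> \<eta>b < \<eta> \<and> 0 < \<epsilon>b \<and> \<epsilon>b < 1 \<and>
          (\<forall>\<epsilon>. (\<forall>j\<in>J. 0 < \<epsilon> j \<and> \<epsilon> j < 1) \<and> Max (\<epsilon> ` J) < \<epsilon>b \<longrightarrow>
             (let \<mu>' = post_entry (mu0 n A \<pi>) J \<theta>m \<epsilon> in
               nearby_BNE n A (mu0 n A \<pi>) \<mu>' (\<lambda>i \<theta>. \<sigma> i) \<eta>b \<noteq> {} \<and>
               (\<forall>s'\<in>nearby_BNE n A (mu0 n A \<pi>) \<mu>' (\<lambda>i \<theta>. \<sigma> i) \<eta>b.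
                  (\<exists>j\<in>J. \<forall>\<theta>\<in>supp (mu0 n A \<pi> j).
                      avg_fitness n A \<pi> \<mu>' s' j \<theta> > avg_fitness n A \<pi> \<mu>' s' j (\<theta>m j))
                  \<or> balanced n A \<pi> \<mu>' s')))"
    proof (intro exI conjI allI impI)
      fix \<epsilon> :: "nat \<Rightarrow> real" assume he: "(\<forall>j\<in>J. 0 < \<epsilon> j \<and> \<epsilon> j < 1) \<and> Max (\<epsilon> ` J) < \<epsilon>b"
      have le: "\<forall>j\<in>J. 0 < \<epsilon> j \<and> \<epsilon> j < \<epsilon>b"
      proof
        fix j assume j: "j \<in> J"
        have "\<epsilon> j \<le> Max (\<epsilon> ` J)" using finJ j by simp
        then show "0 < \<epsilon> j \<and> \<epsilon> j < \<epsilon>b" using he j by auto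
      qed
      interpret adm n A \<pi> J \<theta>m \<epsilon>
        using h he finA by unfold_locales auto
      obtain r m where rm: "goodeq n A \<pi> J \<theta>m \<epsilon> r m" "\<forall>i<n. strat_dist (A i) (r i) (\<sigma> i) \<le> \<eta>b"
        using EX[OF le] by blast
      show "let \<mu>' = post_entry (mu0 n A \<pi>) J \<theta>m \<epsilon> in
               nearby_BNE n A (mu0 n A \<pi>) \<mu>' (\<lambda>i \<theta>. \<sigma> i) \<eta>b \<noteq> {} \<and>
               (\<forall>s'\<in>nearby_BNE n A (mu0 n A \<pi>) \<mu>' (\<lambda>i \<theta>. \<sigma> i) \<eta>b.
                  (\<exists>j\<in>J. \<forall>\<theta>\<in>supp (mu0 n A \<pi> j).
                      avg_fitness n A \<pi> \<mu>' s' j \<theta> > avg_fitness n A \<pi> \<mu>' s' j (\<theta>m j))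
                  \<or> balanced n A \<pi> \<mu>' s')"
        unfolding Let_def
      proof (intro conjI ballI)
        show "nearby_BNE n A (mu0 n A \<pi>) \<mu>' (\<lambda>i \<theta>. \<sigma> i) \<eta>b \<noteq> {}"
          using goodeq_nearby[OF rm] by blast
        fix s' assume "s' \<in> nearby_BNE n A (mu0 n A \<pi>) \<mu>' (\<lambda>i \<theta>. \<sigma> i) \<eta>b"
        then have "s' \<in> BNE_set n A \<mu>'" by (simp add: nearby_BNE_def)
        from univ_part[OF this] show "(\<exists>j\<in>J. \<forall>\<theta>\<in>supp (mu0 n A \<pi> j).
                      avg_fitness n A \<pi> \<mu>' s' j \<theta> > avg_fitness n A \<pi> \<mu>' s' j (\<theta>m j))
                  \<or> balanced n A \<pi> \<mu>' s'" .
      qed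
    qed (use eb in auto)
  qed
  then show ?thesis unfolding stable_no_obs_def using bc(3) by blast
qed



lemma finite_pos_lb:
  assumes "finite S" "\<forall>s\<in>S. (0::real) < f s"
  shows "\<exists>c>0. \<forall>s\<in>S. c \<le> f s"
proof (cases "S = {}")
  case True then show ?thesis by (intro exI[of _ 1]) auto
next
  case False
  then show ?thesis using assms by (intro exI[of _ "Min (f ` S)"]) auto
qed

lemma strat_dist_le:
  assumes fin: "finite Ai" and d: "\<forall>a\<in>Ai. \<bar>x a - y a\<bar> \<le> \<delta>" and d0: "0 \<le> \<delta>"
    and c: "real (card Ai) * \<delta>\<^sup>2 \<le> \<eta>\<^sup>2" and e0: "0 \<le> \<eta>"
  shows "strat_dist Ai x y \<le> \<eta>"
proof -
  have "(\<Sum>a\<in>Ai. (x a - y a)\<^sup>2) \<le> (\<Sum>a\<in>Ai. \<delta>\<^sup>2)"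
  proof (rule sum_mono)
    fix a assume "a \<in> Ai"
    then have "\<bar>x a - y a\<bar> \<le> \<delta>" using d by blast
    then have "\<bar>x a - y a\<bar>\<^sup>2 \<le> \<delta>\<^sup>2" by (intro power_mono) auto
    then show "(x a - y a)\<^sup>2 \<le> \<delta>\<^sup>2" by simp
  qed
  also have "\<dots> \<le> \<eta>\<^sup>2" using c by simp
  finally have "sqrt (\<Sum>a\<in>Ai. (x a - y a)\<^sup>2) \<le> sqrt (\<eta>\<^sup>2)" by (rule real_sqrt_le_mono)
  then show ?thesis using e0 by (simp add: strat_dist_def)
qed

lemma indiff:
  assumes ne: "nash_eq n A \<pi> \<sigma>" and cm: "completely_mixed n A \<sigma>" and i: "i < n" and fin: "finite (A i)"
    and t: "mixed_strategy (A i) t"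
  shows "mlext n A (\<pi> i) (\<sigma>(i:=t)) = mlext n A (\<pi> i) \<sigma>"
proof -
  define v where "v = mlext n A (\<pi> i) \<sigma>"
  define w where "w b = mlext n A (\<pi> i) (\<sigma>(i := pure b))" for b
  have ms: "mixed_strategy (A i) (\<sigma> i)" using ne i by (auto simp: nash_eq_def mixed_profile_def)
  have wl: "w b \<le> v" if "b \<in> A i" for b
    using ne i mixed_pure[OF fin that] unfolding w_def v_def nash_eq_def by blast
  have "mlext n A (\<pi> i) (\<sigma>(i := \<sigma> i)) = (\<Sum>b\<in>A i. \<sigma> i b * mlext n A (\<pi> i) (\<sigma>(i := pure b)))"
    by (rule mlext_lin[where A=A, OF i fin])
  then have "v = (\<Sum>b\<in>A i. \<sigma> i b * w b)" unfolding v_def w_def by simp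
  then have se: "(\<Sum>b\<in>A i. \<sigma> i b * (v - w b)) = 0"
    using ms by (simp add: algebra_simps sum_subtractf sum_distrib_right[symmetric] mixed_strategy_def)
  have nn: "\<And>b. b \<in> A i \<Longrightarrow> 0 \<le> \<sigma> i b * (v - w b)" using wl ms by (auto simp: mixed_strategy_def)
  have z: "\<forall>b\<in>A i. \<sigma> i b * (v - w b) = 0" using sum_nonneg_eq_0_iff[OF fin nn] se by simp
  have wv: "\<forall>b\<in>A i. w b = v"
  proof
    fix b assume b: "b \<in> A i"
    have "0 < \<sigma> i b" using cm i b unfolding completely_mixed_def by blast
    moreover have "\<sigma> i b * (v - w b) = 0" using z b by blast
    ultimately show "w b = v" by simp
  qed
  have "mlext n A (\<pi> i) (\<sigma>(i:=t)) = (\<Sum>b\<in>A i. t b * w b)"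
    unfolding w_def by (rule mlext_lin[where A=A, OF i fin])
  also have "\<dots> = (\<Sum>b\<in>A i. t b * v)" using wv by simp
  also have "\<dots> = v" using t by (simp add: sum_distrib_right[symmetric] mixed_strategy_def)
  finally show ?thesis by (simp add: v_def)
qed

lemma pure_br:
  assumes i: "i < n" and fin: "finite (A i)" and nem: "A i \<noteq> {}"
  shows "\<exists>b\<in>A i. \<forall>t. mixed_strategy (A i) t \<longrightarrow> mlext n A \<theta> (x(i:=t)) \<le> mlext n A \<theta> (x(i := pure b))"
proof -
  define w where "w b = mlext n A \<theta> (x(i := pure b))" for b
  have "Max (w ` A i) \<in> w ` A i" using fin nem by (intro Max_in) auto
  then obtain b where b: "b \<in> A i" "w b = Max (w ` A i)" by (metis imageE)
  have wb: "w c \<le> w b" if "c \<in> A i" for c using b fin that by simp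
  show ?thesis
  proof (intro bexI[OF _ b(1)] allI impI)
    fix t assume t: "mixed_strategy (A i) t"
    have "mlext n A \<theta> (x(i:=t)) = (\<Sum>c\<in>A i. t c * w c)" unfolding w_def by (rule mlext_lin[where A=A, OF i fin])
    also have "\<dots> \<le> (\<Sum>c\<in>A i. t c * w b)"
      using t wb by (intro sum_mono mult_left_mono) (auto simp: mixed_strategy_def)
    also have "\<dots> = w b" using t by (simp add: sum_distrib_right[symmetric] mixed_strategy_def)
    finally show "mlext n A \<theta> (x(i:=t)) \<le> mlext n A \<theta> (x(i := pure b))" by (simp add: w_def)
  qed
qed

lemma case_mixed:
  assumes finA: "\<forall>i<n. finite (A i) \<and> A i \<noteq> {}" and ne: "nash_eq n A \<pi> \<sigma>" and cm: "completely_mixed n A \<sigma>"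
  shows "exist_prop n A \<pi> \<sigma>"
  unfolding exist_prop_def
proof (intro allI impI)
  fix J :: "nat set" and \<theta>m :: "nat \<Rightarrow> 'a ptype" and \<eta> :: real
  assume h: "J \<noteq> {} \<and> J \<subseteq> {..<n} \<and> (\<forall>j\<in>J. \<theta>m j \<in> types n A - supp (mu0 n A \<pi> j)) \<and> 0 < \<eta>"
  have Jn: "\<And>j. j \<in> J \<Longrightarrow> j < n" using h by auto
  have eta: "0 < \<eta>" using h by blast
  have "\<forall>j\<in>J. \<exists>b. b \<in> A j \<and> (\<forall>t. mixed_strategy (A j) t \<longrightarrow> mlext n A (\<theta>m j) (\<sigma>(j:=t)) \<le> mlext n A (\<theta>m j) (\<sigma>(j := pure b)))"
  proof
    fix j assume j: "j \<in> J"
    have "finite (A j)" "A j \<noteq> {}" using finA Jn[OF j] by auto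
    from pure_br[where A=A, OF Jn[OF j] this, of "\<theta>m j" \<sigma>]
    show "\<exists>b. b \<in> A j \<and> (\<forall>t. mixed_strategy (A j) t \<longrightarrow> mlext n A (\<theta>m j) (\<sigma>(j:=t)) \<le> mlext n A (\<theta>m j) (\<sigma>(j := pure b)))"
      by blast
  qed
  from bchoice[OF this] obtain bs where bs0: "\<forall>j\<in>J. bs j \<in> A j \<and> (\<forall>t. mixed_strategy (A j) t \<longrightarrow> mlext n A (\<theta>m j) (\<sigma>(j:=t)) \<le> mlext n A (\<theta>m j) (\<sigma>(j := pure (bs j))))"
    by blast
  then have bs: "\<And>j. j \<in> J \<Longrightarrow> bs j \<in> A j"
    "\<And>j t. j \<in> J \<Longrightarrow> mixed_strategy (A j) t \<Longrightarrow> mlext n A (\<theta>m j) (\<sigma>(j:=t)) \<le> mlext n A (\<theta>m j) (\<sigma>(j := pure (bs j)))"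
    by auto
  have "\<exists>c>0. \<forall>s\<in>Sigma {..<n} A. c \<le> \<sigma> (fst s) (snd s)"
    using cm finA by (intro finite_pos_lb) (auto simp: completely_mixed_def)
  then obtain c0 where c0: "c0 > 0" "\<And>i a. i < n \<Longrightarrow> a \<in> A i \<Longrightarrow> c0 \<le> \<sigma> i a" by fastforce
  define M where "M = real (\<Sum>i<n. card (A i)) + 1"
  have M1: "1 \<le> M" by (simp add: M_def sum_nonneg)
  have cardM: "real (card (A i)) \<le> M" if "i < n" for i
  proof -
    have "card (A i) \<le> (\<Sum>i<n. card (A i))" using that by (intro member_le_sum) auto
    then show ?thesis unfolding M_def by linarith
  qed
  define \<epsilon>b where "\<epsilon>b = min (1/2) (min c0 (\<eta> / (4 * M)))"
  have eb: "0 < \<epsilon>b" "\<epsilon>b < 1" "\<epsilon>b \<le> 1/2" "\<epsilon>b \<le> c0" "\<epsilon>b \<le> \<eta> / (4 * M)"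
    using c0 eta M1 by (auto simp: \<epsilon>b_def)
  show "\<exists>\<eta>b \<epsilon>b. 0 \<le> \<eta>b \<and> \<eta>b < \<eta> \<and> 0 < \<epsilon>b \<and> \<epsilon>b < 1 \<and>
       (\<forall>\<epsilon>. (\<forall>j\<in>J. 0 < \<epsilon> j \<and> \<epsilon> j < \<epsilon>b) \<longrightarrow>
          (\<exists>r m. goodeq n A \<pi> J \<theta>m \<epsilon> r m \<and> (\<forall>i<n. strat_dist (A i) (r i) (\<sigma> i) \<le> \<eta>b)))"
  proof (rule exI[of _ "\<eta>/2"], rule exI[of _ \<epsilon>b], intro conjI allI impI)
    show "0 \<le> \<eta>/2" "\<eta>/2 < \<eta>" using eta by auto
    show "0 < \<epsilon>b" "\<epsilon>b < 1" using eb by auto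
    fix \<epsilon> :: "nat \<Rightarrow> real" assume he: "\<forall>j\<in>J. 0 < \<epsilon> j \<and> \<epsilon> j < \<epsilon>b"
    define m where "m j = pure (bs j)" for j
    define r where "r i = (if i \<in> J then (\<lambda>a. (\<sigma> i a - \<epsilon> i * m i a) / (1 - \<epsilon> i)) else \<sigma> i)" for i
    have e1: "\<epsilon> j < 1" "0 < \<epsilon> j" "\<epsilon> j \<le> 1/2" "\<epsilon> j < c0" "\<epsilon> j \<le> \<eta> / (4 * M)" if "j \<in> J" for j
      using he eb that by fastforce+
    have ms: "mixed_strategy (A i) (\<sigma> i)" if "i < n" for i using ne that by (auto simp: nash_eq_def mixed_profile_def)
    have mm: "mixed_strategy (A j) (m j)" if "j \<in> J" for j
    proof -
      have "finite (A j)" using finA Jn[OF that] by blast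
      then show ?thesis unfolding m_def by (rule mixed_pure[OF _ bs(1)[OF that]])
    qed
    have mb: "0 \<le> m j a \<and> m j a \<le> 1" for j a by (simp add: m_def pure_def)
    have aggs: "agg J \<epsilon> r m = \<sigma>"
    proof (intro ext)
      fix i a show "agg J \<epsilon> r m i a = \<sigma> i a"
      proof (cases "i \<in> J")
        case True
        then have "1 - \<epsilon> i \<noteq> 0" using e1 by fastforce
        then show ?thesis using True by (simp add: agg_def r_def)
      qed (simp add: agg_def r_def)
    qed
    have rm: "mixed_strategy (A i) (r i)" if i: "i < n" for i
    proof (cases "i \<in> J")
      case True
      have d: "0 < 1 - \<epsilon> i" using e1[OF True] by simp
      show ?thesis unfolding mixed_strategy_def
      proof (intro conjI ballI allI impI)
        fix a assume a: "a \<in> A i"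
        have "\<epsilon> i * m i a \<le> \<epsilon> i * 1" using mb e1[OF True] by (intro mult_left_mono) auto
        also have "\<dots> \<le> \<sigma> i a" using c0(2)[OF i a] e1[OF True] by simp
        finally show "0 \<le> r i a" using True d by (simp add: r_def)
      next
        have "(\<Sum>a\<in>A i. r i a) = (\<Sum>a\<in>A i. \<sigma> i a - \<epsilon> i * m i a) / (1 - \<epsilon> i)"
          using True by (simp add: r_def sum_divide_distrib)
        also have "\<dots> = (1 - \<epsilon> i) / (1 - \<epsilon> i)"
          using ms[OF i] mm[OF True] by (simp add: sum_subtractf sum_distrib_left[symmetric] mixed_strategy_def)
        finally show "(\<Sum>a\<in>A i. r i a) = 1" using d by simp
      next
        fix a assume "a \<notin> A i"
        then show "r i a = 0" using ms[OF i] mm[OF True] True by (simp add: r_def mixed_strategy_def)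
      qed
    qed (use ms[OF i] in \<open>simp add: r_def\<close>)
    have "goodeq n A \<pi> J \<theta>m \<epsilon> r m"
      unfolding goodeq_def aggs
    proof (intro conjI allI impI ballI)
      fix i assume i: "i < n"
      show "mixed_strategy (A i) (r i)" using rm[OF i] .
      fix t assume t: "mixed_strategy (A i) t"
      show "mlext n A (\<pi> i) (\<sigma>(i:=t)) \<le> mlext n A (\<pi> i) (\<sigma>(i := r i))"
        using indiff[OF ne cm i _ t] indiff[OF ne cm i _ rm[OF i]] finA i by simp
    next
      fix j assume j: "j \<in> J"
      show "mixed_strategy (A j) (m j)" using mm[OF j] .
      fix t assume t: "mixed_strategy (A j) t"
      show "mlext n A (\<theta>m j) (\<sigma>(j:=t)) \<le> mlext n A (\<theta>m j) (\<sigma>(j := m j))"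
        using bs(2)[OF j t] by (simp add: m_def)
    qed
    moreover have "\<forall>i<n. strat_dist (A i) (r i) (\<sigma> i) \<le> \<eta>/2"
    proof (intro allI impI)
      fix i assume i: "i < n"
      show "strat_dist (A i) (r i) (\<sigma> i) \<le> \<eta>/2"
      proof (cases "i \<in> J")
        case False
        then show ?thesis using eta by (simp add: r_def strat_dist_def)
      next
        case True
        note ei = e1[OF True]
        have d: "0 < 1 - \<epsilon> i" using ei by simp
        have bnd: "\<bar>r i a - \<sigma> i a\<bar> \<le> 2 * \<epsilon> i" if a: "a \<in> A i" for a
        proof -
          have sb: "0 \<le> \<sigma> i a \<and> \<sigma> i a \<le> 1" using mixed_bounds[OF ms[OF i]] finA i by blast
          have "r i a - \<sigma> i a = \<epsilon> i * (\<sigma> i a - m i a) / (1 - \<epsilon> i)"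
            using True d by (simp add: r_def field_simps)
          then have "\<bar>r i a - \<sigma> i a\<bar> = \<epsilon> i * \<bar>\<sigma> i a - m i a\<bar> / (1 - \<epsilon> i)"
            using ei d by (simp add: abs_mult)
          also have "\<dots> \<le> \<epsilon> i * 1 / (1 - \<epsilon> i)"
            using sb mb[of i a] ei d by (intro divide_right_mono mult_left_mono) auto
          also have "\<dots> \<le> 2 * \<epsilon> i" using ei d by (simp add: field_simps)
          finally show ?thesis .
        qed
        have "real (card (A i)) * (2 * \<epsilon> i)\<^sup>2 \<le> M * (2 * \<epsilon> i)\<^sup>2"
          using cardM[OF i] by (intro mult_right_mono) auto
        also have "\<dots> \<le> M * (2 * (\<eta> / (4 * M)))\<^sup>2"
          using ei M1 by (intro mult_left_mono power_mono) auto
        also have "\<dots> = \<eta>\<^sup>2 / (4 * M)" using M1 by (simp add: power2_eq_square field_simps)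
        also have "\<dots> \<le> \<eta>\<^sup>2 / 4" by (rule divide_left_mono) (use M1 in auto)
        also have "\<dots> = (\<eta>/2)\<^sup>2" by (simp add: power_divide)
        finally show ?thesis
          using finA i bnd ei eta by (intro strat_dist_le) auto
      qed
    qed
    ultimately show "\<exists>r m. goodeq n A \<pi> J \<theta>m \<epsilon> r m \<and> (\<forall>i<n. strat_dist (A i) (r i) (\<sigma> i) \<le> \<eta>/2)"
      by blast
  qed
qed



lemma agg_upd_r: "(agg J \<epsilon> (r(i:=y)) m)(i := t) = (agg J \<epsilon> r m)(i := t)"
  by (intro ext) (auto simp: agg_def)

lemma agg_upd_m: "(agg J \<epsilon> r (m(i:=y)))(i := t) = (agg J \<epsilon> r m)(i := t)"
  by (intro ext) (auto simp: agg_def)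

lemma game_eq:
  fixes \<pi> \<theta>m :: "nat \<Rightarrow> 'a ptype"
  assumes finA: "\<forall>i<n. finite (A i) \<and> A i \<noteq> {}" and J: "J \<subseteq> {..<n}" and KR: "KR \<subseteq> {..<n}"
    and r0: "\<forall>i<n. mixed_strategy (A i) (r0 i)"
  shows "\<exists>r m. (\<forall>i<n. mixed_strategy (A i) (r i)) \<and> (\<forall>i. i \<notin> KR \<longrightarrow> r i = r0 i) \<and>
     (\<forall>i\<in>KR. \<forall>t. mixed_strategy (A i) t \<longrightarrow>
        mlext n A (\<pi> i) ((agg J \<epsilon> r m)(i:=t)) \<le> mlext n A (\<pi> i) ((agg J \<epsilon> r m)(i := r i))) \<and>
     (\<forall>j\<in>J. mixed_strategy (A j) (m j) \<and> (\<forall>t. mixed_strategy (A j) t \<longrightarrow>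
        mlext n A (\<theta>m j) ((agg J \<epsilon> r m)(j:=t)) \<le> mlext n A (\<theta>m j) ((agg J \<epsilon> r m)(j := m j))))"
proof -
  define K :: "(bool \<times> nat) set" where "K = (\<lambda>i. (False, i)) ` KR \<union> (\<lambda>j. (True, j)) ` J"
  define B :: "bool \<times> nat \<Rightarrow> 'a set" where "B k = A (snd k)" for k
  define R where "R P i = (if i \<in> KR then P (False, i) else r0 i)" for P :: "bool \<times> nat \<Rightarrow> 'a \<Rightarrow> real" and i
  define Mu where "Mu P j = P (True, j)" for P :: "bool \<times> nat \<Rightarrow> 'a \<Rightarrow> real" and j
  define u where "u k P = (if fst k then mlext n A (\<theta>m (snd k)) ((agg J \<epsilon> (R P) (Mu P))(snd k := P k))
      else mlext n A (\<pi> (snd k)) ((agg J \<epsilon> (R P) (Mu P))(snd k := P k)))" for k P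
  have Kn: "snd k < n" if "k \<in> K" for k using that J KR by (auto simp: K_def)
  have finK: "finite K" using J KR by (auto simp: K_def intro: finite_subset)
  have finB: "\<forall>k\<in>K. finite (B k) \<and> B k \<noteq> {}" using finA Kn by (auto simp: B_def)
  have upd: "u k (P(k:=t)) = (if fst k then mlext n A (\<theta>m (snd k)) ((agg J \<epsilon> (R P) (Mu P))(snd k := t))
      else mlext n A (\<pi> (snd k)) ((agg J \<epsilon> (R P) (Mu P))(snd k := t)))" if k: "k \<in> K" for k P t
  proof (cases "fst k")
    case True
    then obtain j where kj: "k = (True, j)" by (cases k) auto
    have "R (P(k:=t)) = R P" by (intro ext) (auto simp: R_def kj)
    moreover have "Mu (P(k:=t)) = (Mu P)(j := t)" by (intro ext) (auto simp: Mu_def kj)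
    ultimately show ?thesis using True by (simp add: u_def kj agg_upd_m)
  next
    case False
    then obtain i where ki: "k = (False, i)" by (cases k) auto
    have iKR: "i \<in> KR" using k by (auto simp: K_def ki)
    have "R (P(k:=t)) = (R P)(i := t)" using iKR by (intro ext) (auto simp: R_def ki)
    moreover have "Mu (P(k:=t)) = Mu P" by (intro ext) (auto simp: Mu_def ki)
    ultimately show ?thesis using False by (simp add: u_def ki agg_upd_r)
  qed
  have lin: "\<forall>k\<in>K. \<forall>P t. gprof K B P \<longrightarrow> mixed_strategy (B k) t \<longrightarrow>
              u k (P(k:=t)) = (\<Sum>b\<in>B k. t b * u k (P(k := pure b)))"
  proof (intro ballI allI impI)
    fix k P t assume k: "k \<in> K" and "gprof K B P" "mixed_strategy (B k) t"
    have fin: "finite (A (snd k))" using finA Kn[OF k] by blast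
    show "u k (P(k:=t)) = (\<Sum>b\<in>B k. t b * u k (P(k := pure b)))"
    proof (cases "fst k")
      case True
      show ?thesis unfolding upd[OF k] B_def
        by (simp only: True if_True) (rule mlext_lin[where A=A, OF Kn[OF k] fin])
    next
      case False
      show ?thesis unfolding upd[OF k] B_def
        by (simp only: False if_False) (rule mlext_lin[where A=A, OF Kn[OF k] fin])
    qed
  qed
  have cont: "\<forall>k\<in>K. \<forall>Ps P. (\<forall>m. gprof K B (Ps m)) \<longrightarrow> gprof K B P \<longrightarrow>
              (\<forall>k'\<in>K. \<forall>b\<in>B k'. (\<lambda>m. Ps m k' b) \<longlonglongrightarrow> P k' b) \<longrightarrow> (\<lambda>m. u k (Ps m)) \<longlonglongrightarrow> u k P"
  proof (intro ballI allI impI)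
    fix k and Ps :: "nat \<Rightarrow> bool \<times> nat \<Rightarrow> 'a \<Rightarrow> real" and P :: "bool \<times> nat \<Rightarrow> 'a \<Rightarrow> real"
    assume k: "k \<in> K" and lim: "\<forall>k'\<in>K. \<forall>b\<in>B k'. (\<lambda>m. Ps m k' b) \<longlonglongrightarrow> P k' b"
    have lR: "(\<lambda>m. R (Ps m) i a) \<longlonglongrightarrow> R P i a" if "i < n" "a \<in> A i" for i a
    proof (cases "i \<in> KR")
      case True
      then have "(False, i) \<in> K" by (auto simp: K_def)
      then show ?thesis using lim that True by (auto simp: R_def B_def)
    qed (simp add: R_def)
    have lM: "(\<lambda>m. Mu (Ps m) j a) \<longlonglongrightarrow> Mu P j a" if "j \<in> J" "a \<in> A j" for j a
    proof -
      have "(True, j) \<in> K" using that by (auto simp: K_def)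
      then show ?thesis using lim that by (auto simp: Mu_def B_def)
    qed
    have lk: "(\<lambda>m. Ps m k a) \<longlonglongrightarrow> P k a" if "a \<in> A (snd k)" for a
      using lim k that by (auto simp: B_def)
    have lagg: "\<forall>j<n. \<forall>a\<in>A j. (\<lambda>m. ((agg J \<epsilon> (R (Ps m)) (Mu (Ps m)))(snd k := Ps m k)) j a)
        \<longlonglongrightarrow> ((agg J \<epsilon> (R P) (Mu P))(snd k := P k)) j a"
    proof (intro allI impI ballI)
      fix j a assume j: "j < n" and a: "a \<in> A j"
      show "(\<lambda>m. ((agg J \<epsilon> (R (Ps m)) (Mu (Ps m)))(snd k := Ps m k)) j a)
        \<longlonglongrightarrow> ((agg J \<epsilon> (R P) (Mu P))(snd k := P k)) j a"
      proof (cases "j = snd k")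
        case True
        then show ?thesis using lk a by simp
      next
        case False
        then show ?thesis using lR[OF j a] lM[OF _ a] by (auto simp: agg_def intro!: tendsto_intros)
      qed
    qed
    show "(\<lambda>m. u k (Ps m)) \<longlonglongrightarrow> u k P"
    proof (cases "fst k")
      case True
      show ?thesis unfolding u_def by (simp only: True if_True) (rule mlext_tendsto[OF lagg])
    next
      case False
      show ?thesis unfolding u_def by (simp only: False if_False) (rule mlext_tendsto[OF lagg])
    qed
  qed
  obtain P where P: "gprof K B P" and br: "\<forall>k\<in>K. \<forall>t. mixed_strategy (B k) t \<longrightarrow> u k (P(k:=t)) \<le> u k P"
    using nash_exists[OF finK finB lin cont] by blast
  define r where "r = R P"
  define m where "m = Mu P"
  show ?thesis
  proof (rule exI[of _ r], rule exI[of _ m], intro conjI allI impI ballI)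
    fix i assume i: "i < n"
    show "mixed_strategy (A i) (r i)"
    proof (cases "i \<in> KR")
      case True
      then have "(False, i) \<in> K" by (auto simp: K_def)
      then show ?thesis using P True by (auto simp: gprof_def r_def R_def B_def)
    qed (use r0 i in \<open>simp add: r_def R_def\<close>)
  next
    fix i assume "i \<notin> KR" then show "r i = r0 i" by (simp add: r_def R_def)
  next
    fix i t assume i: "i \<in> KR" and t: "mixed_strategy (A i) t"
    have k: "(False, i) \<in> K" using i by (auto simp: K_def)
    have "u (False, i) (P((False, i) := t)) \<le> u (False, i) P" using br k t by (auto simp: B_def)
    moreover have "u (False, i) P = u (False, i) (P((False, i) := P (False, i)))" by simp
    ultimately show "mlext n A (\<pi> i) ((agg J \<epsilon> r m)(i:=t)) \<le> mlext n A (\<pi> i) ((agg J \<epsilon> r m)(i := r i))"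
      unfolding upd[OF k] using i by (simp add: r_def m_def R_def)
  next
    fix j assume j: "j \<in> J"
    have k: "(True, j) \<in> K" using j by (auto simp: K_def)
    show "mixed_strategy (A j) (m j)" using P k by (auto simp: gprof_def m_def Mu_def B_def)
    fix t assume t: "mixed_strategy (A j) t"
    have "u (True, j) (P((True, j) := t)) \<le> u (True, j) P" using br k t by (auto simp: B_def)
    moreover have "u (True, j) P = u (True, j) (P((True, j) := P (True, j)))" by simp
    ultimately show "mlext n A (\<theta>m j) ((agg J \<epsilon> r m)(j:=t)) \<le> mlext n A (\<theta>m j) ((agg J \<epsilon> r m)(j := m j))"
      unfolding upd[OF k] by (simp add: r_def m_def Mu_def)
  qed
qed



lemma mlext_cont_at:
  "\<forall>e>0. \<exists>d>0. \<forall>x. (\<forall>j<n. \<forall>a\<in>A j. \<bar>x j a - y j a\<bar> < d) \<longrightarrow> \<bar>mlext n A \<theta> x - mlext n A \<theta> y\<bar> < e"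
proof (intro allI impI)
  fix e :: real assume e: "e > 0"
  show "\<exists>d>0. \<forall>x. (\<forall>j<n. \<forall>a\<in>A j. \<bar>x j a - y j a\<bar> < d) \<longrightarrow> \<bar>mlext n A \<theta> x - mlext n A \<theta> y\<bar> < e"
  proof (rule ccontr)
    assume nd: "\<not> (\<exists>d>0. \<forall>x. (\<forall>j<n. \<forall>a\<in>A j. \<bar>x j a - y j a\<bar> < d) \<longrightarrow> \<bar>mlext n A \<theta> x - mlext n A \<theta> y\<bar> < e)"
    have "\<exists>x. (\<forall>j<n. \<forall>a\<in>A j. \<bar>x j a - y j a\<bar> < 1 / Suc k) \<and> \<not> \<bar>mlext n A \<theta> x - mlext n A \<theta> y\<bar> < e" for k
    proof -
      have "(0::real) < 1 / Suc k" by simp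
      then show ?thesis using nd by blast
    qed
    then have "\<forall>k. \<exists>x. (\<forall>j<n. \<forall>a\<in>A j. \<bar>x j a - y j a\<bar> < 1 / Suc k) \<and> \<not> \<bar>mlext n A \<theta> x - mlext n A \<theta> y\<bar> < e"
      by blast
    then obtain X where X: "\<forall>k. (\<forall>j<n. \<forall>a\<in>A j. \<bar>X k j a - y j a\<bar> < 1 / Suc k) \<and> \<not> \<bar>mlext n A \<theta> (X k) - mlext n A \<theta> y\<bar> < e"
      by (rule choice[THEN exE])
    have lim: "\<forall>j<n. \<forall>a\<in>A j. (\<lambda>k. X k j a) \<longlonglongrightarrow> y j a"
    proof (intro allI impI ballI)
      fix j a assume j: "j < n" and a: "a \<in> A j"
      have "(\<lambda>k. X k j a - y j a) \<longlonglongrightarrow> 0"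
      proof (rule Lim_null_comparison[of _ "\<lambda>k. 1 / Suc k"])
        show "\<forall>\<^sub>F k in sequentially. norm (X k j a - y j a) \<le> 1 / real (Suc k)"
          using X j a by (intro always_eventually allI) (simp add: less_imp_le)
        show "(\<lambda>k. 1 / real (Suc k)) \<longlonglongrightarrow> 0" using LIMSEQ_inverse_real_of_nat by (simp add: inverse_eq_divide)
      qed
      then show "(\<lambda>k. X k j a) \<longlonglongrightarrow> y j a" by (simp add: LIM_zero_iff)
    qed
    have "(\<lambda>k. mlext n A \<theta> (X k) - mlext n A \<theta> y) \<longlonglongrightarrow> 0"
      using mlext_tendsto[OF lim, of \<theta>] by (simp add: LIM_zero)
    then have "\<forall>\<^sub>F k in sequentially. \<bar>mlext n A \<theta> (X k) - mlext n A \<theta> y\<bar> < e"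
      using e by (auto dest: order_tendstoD(2) tendsto_rabs_zero)
    then obtain k where "\<bar>mlext n A \<theta> (X k) - mlext n A \<theta> y\<bar> < e" by (auto simp: eventually_sequentially)
    then show False using X by blast
  qed
qed

lemma finite_min_delta:
  assumes "finite S" and ex: "\<forall>s\<in>S. \<exists>d>0. Q s d"
    and mono: "\<And>s d d'. s \<in> S \<Longrightarrow> Q s d \<Longrightarrow> 0 < d' \<Longrightarrow> d' \<le> d \<Longrightarrow> Q s d'"
  shows "\<exists>d>0. \<forall>s\<in>S. Q s (d::real)"
proof -
  from bchoice[OF ex] obtain D where D: "\<forall>s\<in>S. 0 < D s \<and> Q s (D s)" by blast
  obtain c where c: "c > 0" "\<forall>s\<in>S. c \<le> D s" using finite_pos_lb[OF assms(1), of D] D by blast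
  show ?thesis using c D mono by (intro exI[of _ c]) blast
qed

lemma strict_br:
  assumes finA: "\<forall>i<n. finite (A i) \<and> A i \<noteq> {}" and sne: "strict_nash_eq n A \<pi> \<sigma>"
  shows "\<exists>d>0. \<forall>\<epsilon> m. (\<forall>j\<in>J. 0 \<le> \<epsilon> j \<and> \<epsilon> j < d) \<and> (\<forall>j\<in>J. mixed_strategy (A j) (m j)) \<longrightarrow>
     (\<forall>i<n. \<forall>t. mixed_strategy (A i) t \<longrightarrow>
        mlext n A (\<pi> i) ((agg J \<epsilon> \<sigma> m)(i:=t)) \<le> mlext n A (\<pi> i) ((agg J \<epsilon> \<sigma> m)(i := \<sigma> i)))"
proof -
  have ne: "nash_eq n A \<pi> \<sigma>" using sne by (simp add: strict_nash_eq_def)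
  have ms: "mixed_strategy (A i) (\<sigma> i)" if "i < n" for i using ne that by (auto simp: nash_eq_def mixed_profile_def)
  define Q where "Q s d = (\<forall>x. (\<forall>j<n. \<forall>a\<in>A j. \<bar>x j a - \<sigma> j a\<bar> < d) \<longrightarrow>
      mlext n A (\<pi> (fst s)) (x(fst s := pure (snd s))) \<le> mlext n A (\<pi> (fst s)) (x(fst s := \<sigma> (fst s))))" for s d
  have ex: "\<forall>s\<in>Sigma {..<n} A. \<exists>d>0. Q s d"
  proof
    fix s assume s: "s \<in> Sigma {..<n} A"
    obtain i b where sib: "s = (i, b)" by (cases s)
    have i: "i < n" and b: "b \<in> A i" using s sib by auto
    show "\<exists>d>0. Q s d"
    proof (cases "pure b = \<sigma> i")
      case True
      then show ?thesis by (intro exI[of _ 1]) (simp add: Q_def sib)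
    next
      case False
      have fi: "finite (A i)" using finA i by blast
      have mpb: "mixed_strategy (A i) (pure b)" by (rule mixed_pure[OF fi b])
      define g where "g = mlext n A (\<pi> i) \<sigma> - mlext n A (\<pi> i) (\<sigma>(i := pure b))"
      have g: "g > 0" using sne i mpb False unfolding g_def strict_nash_eq_def by auto
      have g2: "g/2 > 0" using g by simp
      obtain d1 where d1: "d1 > 0" "\<forall>x. (\<forall>j<n. \<forall>a\<in>A j. \<bar>x j a - (\<sigma>(i := pure b)) j a\<bar> < d1) \<longrightarrow>
          \<bar>mlext n A (\<pi> i) x - mlext n A (\<pi> i) (\<sigma>(i := pure b))\<bar> < g/2"
        using mlext_cont_at[of n A "\<sigma>(i := pure b)" "\<pi> i", rule_format, OF g2] by blast
      obtain d2 where d2: "d2 > 0" "\<forall>x. (\<forall>j<n. \<forall>a\<in>A j. \<bar>x j a - \<sigma> j a\<bar> < d2) \<longrightarrow>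
          \<bar>mlext n A (\<pi> i) x - mlext n A (\<pi> i) \<sigma>\<bar> < g/2"
        using mlext_cont_at[of n A \<sigma> "\<pi> i", rule_format, OF g2] by blast
      show ?thesis
      proof (intro exI[of _ "min d1 d2"] conjI)
        show "0 < min d1 d2" using d1 d2 by simp
        show "Q s (min d1 d2)" unfolding Q_def sib fst_conv snd_conv
        proof (intro allI impI)
          fix x assume x: "\<forall>j<n. \<forall>a\<in>A j. \<bar>x j a - \<sigma> j a\<bar> < min d1 d2"
          have "\<forall>j<n. \<forall>a\<in>A j. \<bar>(x(i := pure b)) j a - (\<sigma>(i := pure b)) j a\<bar> < d1"
            using x d1(1) by auto
          from mp[OF d1(2)[THEN spec, of "x(i := pure b)"] this] have A1: "mlext n A (\<pi> i) (x(i := pure b)) < mlext n A (\<pi> i) (\<sigma>(i := pure b)) + g/2"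
            by linarith
          have "\<forall>j<n. \<forall>a\<in>A j. \<bar>(x(i := \<sigma> i)) j a - \<sigma> j a\<bar> < d2"
            using x d2(1) by auto
          from mp[OF d2(2)[THEN spec, of "x(i := \<sigma> i)"] this] have A2: "mlext n A (\<pi> i) \<sigma> - g/2 < mlext n A (\<pi> i) (x(i := \<sigma> i))"
            by linarith
          show "mlext n A (\<pi> i) (x(i := pure b)) \<le> mlext n A (\<pi> i) (x(i := \<sigma> i))"
            using A1 A2 unfolding g_def by argo
        qed
      qed
    qed
  qed
  have mono: "Q s d'" if "s \<in> Sigma {..<n} A" "Q s d" "0 < d'" "d' \<le> d" for s and d d' :: real
    using that unfolding Q_def by (meson less_le_trans)
  have finS: "finite (Sigma {..<n} A)" using finA by auto
  have "\<exists>d>0. \<forall>s\<in>Sigma {..<n} A. Q s d"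
    by (rule finite_min_delta[where Q=Q, OF finS ex]) (rule mono)
  then obtain d where d: "d > 0" "\<forall>s\<in>Sigma {..<n} A. Q s d" by (elim exE conjE) (intro that)
  show ?thesis
  proof (intro exI[of _ d] conjI allI impI d(1))
    fix \<epsilon> m i t
    assume h: "(\<forall>j\<in>J. 0 \<le> \<epsilon> j \<and> \<epsilon> j < d) \<and> (\<forall>j\<in>J. mixed_strategy (A j) (m j))"
      and i: "i < n" and t: "mixed_strategy (A i) t"
    define x where "x = agg J \<epsilon> \<sigma> m"
    have close: "\<forall>j<n. \<forall>a\<in>A j. \<bar>x j a - \<sigma> j a\<bar> < d"
    proof (intro allI impI ballI)
      fix j a assume j: "j < n" and a: "a \<in> A j"
      show "\<bar>x j a - \<sigma> j a\<bar> < d"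
      proof (cases "j \<in> J")
        case True
        have fj: "finite (A j)" using finA j by blast
        have b1: "0 \<le> \<sigma> j a \<and> \<sigma> j a \<le> 1" using mixed_bounds[OF ms[OF j] fj] .
        have b2: "0 \<le> m j a \<and> m j a \<le> 1" using mixed_bounds[OF _ fj] h True by blast
        have "x j a - \<sigma> j a = \<epsilon> j * (m j a - \<sigma> j a)" using True by (simp add: x_def agg_def algebra_simps)
        then have "\<bar>x j a - \<sigma> j a\<bar> = \<epsilon> j * \<bar>m j a - \<sigma> j a\<bar>" using h True by (simp add: abs_mult)
        also have "\<dots> \<le> \<epsilon> j * 1" using b1 b2 h True by (intro mult_left_mono) auto
        also have "\<dots> < d" using h True by simp
        finally show ?thesis .
      qed (simp add: x_def agg_def d(1))
    qed
    have Qb: "mlext n A (\<pi> i) (x(i := pure b)) \<le> mlext n A (\<pi> i) (x(i := \<sigma> i))" if "b \<in> A i" for b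
      using d(2) that i close unfolding Q_def by fastforce
    have fi: "finite (A i)" using finA i by blast
    have "mlext n A (\<pi> i) (x(i:=t)) = (\<Sum>b\<in>A i. t b * mlext n A (\<pi> i) (x(i := pure b)))"
      by (rule mlext_lin[where A=A, OF i fi])
    also have "\<dots> \<le> (\<Sum>b\<in>A i. t b * mlext n A (\<pi> i) (x(i := \<sigma> i)))"
      using t Qb by (intro sum_mono mult_left_mono) (auto simp: mixed_strategy_def)
    also have "\<dots> = mlext n A (\<pi> i) (x(i := \<sigma> i))"
      using t by (simp add: sum_distrib_right[symmetric] mixed_strategy_def)
    finally show "mlext n A (\<pi> i) ((agg J \<epsilon> \<sigma> m)(i:=t)) \<le> mlext n A (\<pi> i) ((agg J \<epsilon> \<sigma> m)(i := \<sigma> i))"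
      by (simp add: x_def)
  qed
qed

lemma case_strict:
  assumes finA: "\<forall>i<n. finite (A i) \<and> A i \<noteq> {}" and sne: "strict_nash_eq n A \<pi> \<sigma>"
  shows "exist_prop n A \<pi> \<sigma>"
  unfolding exist_prop_def
proof (intro allI impI)
  fix J :: "nat set" and \<theta>m :: "nat \<Rightarrow> 'a ptype" and \<eta> :: real
  assume h: "J \<noteq> {} \<and> J \<subseteq> {..<n} \<and> (\<forall>j\<in>J. \<theta>m j \<in> types n A - supp (mu0 n A \<pi> j)) \<and> 0 < \<eta>"
  have ne: "nash_eq n A \<pi> \<sigma>" using sne by (simp add: strict_nash_eq_def)
  have ms: "\<forall>i<n. mixed_strategy (A i) (\<sigma> i)" using ne by (auto simp: nash_eq_def mixed_profile_def)
  obtain d where d: "d > 0" and dbr: "\<And>\<epsilon> m. (\<forall>j\<in>J. 0 \<le> \<epsilon> j \<and> \<epsilon> j < d) \<and> (\<forall>j\<in>J. mixed_strategy (A j) (m j)) \<Longrightarrow>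
     (\<forall>i<n. \<forall>t. mixed_strategy (A i) t \<longrightarrow>
        mlext n A (\<pi> i) ((agg J \<epsilon> \<sigma> m)(i:=t)) \<le> mlext n A (\<pi> i) ((agg J \<epsilon> \<sigma> m)(i := \<sigma> i)))"
    using strict_br[OF finA sne, of J] by blast
  define \<epsilon>b where "\<epsilon>b = min (1/2) d"
  show "\<exists>\<eta>b \<epsilon>b. 0 \<le> \<eta>b \<and> \<eta>b < \<eta> \<and> 0 < \<epsilon>b \<and> \<epsilon>b < 1 \<and>
       (\<forall>\<epsilon>. (\<forall>j\<in>J. 0 < \<epsilon> j \<and> \<epsilon> j < \<epsilon>b) \<longrightarrow>
          (\<exists>r m. goodeq n A \<pi> J \<theta>m \<epsilon> r m \<and> (\<forall>i<n. strat_dist (A i) (r i) (\<sigma> i) \<le> \<eta>b)))"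
  proof (rule exI[of _ 0], rule exI[of _ \<epsilon>b], intro conjI allI impI)
    show "0 \<le> (0::real)" "0 < \<eta>" using h by auto
    show "0 < \<epsilon>b" "\<epsilon>b < 1" using d by (auto simp: \<epsilon>b_def)
    fix \<epsilon> :: "nat \<Rightarrow> real" assume he: "\<forall>j\<in>J. 0 < \<epsilon> j \<and> \<epsilon> j < \<epsilon>b"
    obtain r m where rm: "\<forall>i<n. mixed_strategy (A i) (r i)" "\<forall>i. i \<notin> {} \<longrightarrow> r i = \<sigma> i"
      "\<forall>j\<in>J. mixed_strategy (A j) (m j) \<and> (\<forall>t. mixed_strategy (A j) t \<longrightarrow>
        mlext n A (\<theta>m j) ((agg J \<epsilon> r m)(j:=t)) \<le> mlext n A (\<theta>m j) ((agg J \<epsilon> r m)(j := m j)))"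
      using game_eq[OF finA _ _ ms, of J "{}" \<pi> \<epsilon> \<theta>m] h by blast
    have r: "r = \<sigma>" using rm(2) by auto
    have "goodeq n A \<pi> J \<theta>m \<epsilon> r m"
      unfolding goodeq_def
    proof (intro conjI allI impI ballI)
      fix i assume i: "i < n"
      show "mixed_strategy (A i) (r i)" using rm(1) i by blast
      fix t assume t: "mixed_strategy (A i) t"
      have "(\<forall>j\<in>J. 0 \<le> \<epsilon> j \<and> \<epsilon> j < d) \<and> (\<forall>j\<in>J. mixed_strategy (A j) (m j))"
        using he rm(3) by (auto simp: \<epsilon>b_def)
      from dbr[OF this] i t show "mlext n A (\<pi> i) ((agg J \<epsilon> r m)(i:=t)) \<le> mlext n A (\<pi> i) ((agg J \<epsilon> r m)(i := r i))"
        by (simp add: r)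
    next
      fix j assume "j \<in> J"
      then show "mixed_strategy (A j) (m j)" "\<And>t. mixed_strategy (A j) t \<Longrightarrow>
        mlext n A (\<theta>m j) ((agg J \<epsilon> r m)(j:=t)) \<le> mlext n A (\<theta>m j) ((agg J \<epsilon> r m)(j := m j))"
        using rm(3) by blast+
    qed
    moreover have "\<forall>i<n. strat_dist (A i) (r i) (\<sigma> i) \<le> 0" by (simp add: r strat_dist_def)
    ultimately show "\<exists>r m. goodeq n A \<pi> J \<theta>m \<epsilon> r m \<and> (\<forall>i<n. strat_dist (A i) (r i) (\<sigma> i) \<le> 0)" by blast
  qed
qed



lemma close_unique:
  assumes finA: "\<forall>i<n. finite (A i) \<and> A i \<noteq> {}" and une: "unique_nash_eq n A \<pi> \<sigma>" and eta: "\<eta> > 0"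
  shows "\<exists>d>0. \<forall>\<epsilon> r m. (\<forall>j\<in>J. 0 \<le> \<epsilon> j \<and> \<epsilon> j < d) \<and> (\<forall>i<n. mixed_strategy (A i) (r i)) \<and>
     (\<forall>j\<in>J. mixed_strategy (A j) (m j)) \<and>
     (\<forall>i<n. \<forall>t. mixed_strategy (A i) t \<longrightarrow>
        mlext n A (\<pi> i) ((agg J \<epsilon> r m)(i:=t)) \<le> mlext n A (\<pi> i) ((agg J \<epsilon> r m)(i := r i)))
     \<longrightarrow> (\<forall>i<n. strat_dist (A i) (r i) (\<sigma> i) \<le> \<eta>)"
proof (rule ccontr)
  define G where "G d \<epsilon> r m \<longleftrightarrow> (\<forall>j\<in>J. 0 \<le> \<epsilon> j \<and> \<epsilon> j < d) \<and> (\<forall>i<n. mixed_strategy (A i) (r i)) \<and>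
     (\<forall>j\<in>J. mixed_strategy (A j) (m j)) \<and>
     (\<forall>i<n. \<forall>t. mixed_strategy (A i) t \<longrightarrow>
        mlext n A (\<pi> i) ((agg J \<epsilon> r m)(i:=t)) \<le> mlext n A (\<pi> i) ((agg J \<epsilon> r m)(i := r i)))"
    for d :: real and \<epsilon> r m
  assume "\<not> ?thesis"
  then have nd: "\<not> (\<exists>d>0. \<forall>\<epsilon> r m. G d \<epsilon> r m \<longrightarrow> (\<forall>i<n. strat_dist (A i) (r i) (\<sigma> i) \<le> \<eta>))"
    unfolding G_def by simp
  have "\<forall>k. \<exists>\<epsilon>. \<exists>r. \<exists>m. G (1 / Suc k) \<epsilon> r m \<and> \<not> (\<forall>i<n. strat_dist (A i) (r i) (\<sigma> i) \<le> \<eta>)"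
  proof
    fix k
    have "(0::real) < 1 / Suc k" by simp
    then show "\<exists>\<epsilon>. \<exists>r. \<exists>m. G (1 / Suc k) \<epsilon> r m \<and> \<not> (\<forall>i<n. strat_dist (A i) (r i) (\<sigma> i) \<le> \<eta>)"
      using nd by blast
  qed
  then obtain E where "\<forall>k. \<exists>r. \<exists>m. G (1 / Suc k) (E k) r m \<and> \<not> (\<forall>i<n. strat_dist (A i) (r i) (\<sigma> i) \<le> \<eta>)"
    by (rule choice[THEN exE])
  then obtain R where "\<forall>k. \<exists>m. G (1 / Suc k) (E k) (R k) m \<and> \<not> (\<forall>i<n. strat_dist (A i) (R k i) (\<sigma> i) \<le> \<eta>)"
    by (rule choice[THEN exE])
  then obtain M where GM: "\<forall>k. G (1 / Suc k) (E k) (R k) (M k) \<and> \<not> (\<forall>i<n. strat_dist (A i) (R k i) (\<sigma> i) \<le> \<eta>)"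
    by (rule choice[THEN exE])
  have E: "\<And>k j. j \<in> J \<Longrightarrow> 0 \<le> E k j \<and> E k j < 1 / Suc k" using GM by (simp add: G_def)
  have Rm: "\<And>k i. i < n \<Longrightarrow> mixed_strategy (A i) (R k i)" using GM by (simp add: G_def)
  have Mm: "\<And>k j. j \<in> J \<Longrightarrow> mixed_strategy (A j) (M k j)" using GM by (simp add: G_def)
  have BR: "\<And>k i t. i < n \<Longrightarrow> mixed_strategy (A i) t \<Longrightarrow>
      mlext n A (\<pi> i) ((agg J (E k) (R k) (M k))(i:=t)) \<le> mlext n A (\<pi> i) ((agg J (E k) (R k) (M k))(i := R k i))"
    using GM by (simp add: G_def)
  have far: "\<And>k. \<exists>i<n. \<eta> < strat_dist (A i) (R k i) (\<sigma> i)" using GM by (auto simp: not_le)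
  define S where "S = Sigma {..<n} A"
  have finS: "finite S" using finA by (auto simp: S_def)
  have Rb: "0 \<le> R k i a \<and> R k i a \<le> 1" if "i < n" for k i a
    using mixed_bounds[OF Rm[OF that]] finA that by blast
  obtain \<phi> where \<phi>: "strict_mono \<phi>" "\<forall>s\<in>S. convergent (\<lambda>k. R (\<phi> k) (fst s) (snd s))"
    using bolzano_fin[OF finS, of "\<lambda>k s. R k (fst s) (snd s)" 1] Rb by (auto simp: S_def)
  define rb where "rb i a = (if i < n \<and> a \<in> A i then lim (\<lambda>k. R (\<phi> k) i a) else 0)" for i a
  have limR: "(\<lambda>k. R (\<phi> k) i a) \<longlonglongrightarrow> rb i a" if "i < n" "a \<in> A i" for i a
  proof -
    have "(i, a) \<in> S" using that by (simp add: S_def)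
    then have "convergent (\<lambda>k. R (\<phi> k) i a)" using \<phi>(2) by fastforce
    then show ?thesis using that by (simp add: rb_def convergent_LIMSEQ_iff)
  qed
  have rbm: "mixed_strategy (A i) (rb i)" if i: "i < n" for i
    unfolding mixed_strategy_def
  proof (intro conjI ballI allI impI)
    fix a assume a: "a \<in> A i"
    show "0 \<le> rb i a" using LIMSEQ_le_const[OF limR[OF i a]] Rb[OF i] by auto
  next
    have fin: "finite (A i)" using finA i by blast
    have "(\<lambda>k. \<Sum>a\<in>A i. R (\<phi> k) i a) \<longlonglongrightarrow> (\<Sum>a\<in>A i. rb i a)"
      using limR[OF i] by (intro tendsto_sum) auto
    moreover have "(\<lambda>k. \<Sum>a\<in>A i. R (\<phi> k) i a) = (\<lambda>k. 1)"
      using Rm[OF i] by (simp add: mixed_strategy_def)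
    ultimately show "(\<Sum>a\<in>A i. rb i a) = 1" using LIMSEQ_unique tendsto_const by metis
  next
    fix a assume "a \<notin> A i" then show "rb i a = 0" by (simp add: rb_def)
  qed
  have inv0: "(\<lambda>k. 1 / real (Suc k)) \<longlonglongrightarrow> 0" using LIMSEQ_inverse_real_of_nat by (simp add: inverse_eq_divide)
  have limA: "\<forall>j<n. \<forall>a\<in>A j. (\<lambda>k. agg J (E (\<phi> k)) (R (\<phi> k)) (M (\<phi> k)) j a) \<longlonglongrightarrow> rb j a"
  proof (intro allI impI ballI)
    fix j a assume j: "j < n" and a: "a \<in> A j"
    show "(\<lambda>k. agg J (E (\<phi> k)) (R (\<phi> k)) (M (\<phi> k)) j a) \<longlonglongrightarrow> rb j a"
    proof (cases "j \<in> J")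
      case False then show ?thesis using limR[OF j a] by (simp add: agg_def)
    next
      case True
      have fin: "finite (A j)" using finA j by blast
      have "(\<lambda>k. E (\<phi> k) j * (M (\<phi> k) j a - R (\<phi> k) j a)) \<longlonglongrightarrow> 0"
      proof (rule Lim_null_comparison[OF _ inv0], rule always_eventually, rule allI)
        fix k
        have m: "0 \<le> M (\<phi> k) j a \<and> M (\<phi> k) j a \<le> 1" using mixed_bounds[OF Mm[OF True] fin] .
        have r: "0 \<le> R (\<phi> k) j a \<and> R (\<phi> k) j a \<le> 1" using Rb[OF j] .
        have e: "0 \<le> E (\<phi> k) j" "E (\<phi> k) j < 1 / Suc (\<phi> k)" using E[OF True] by auto
        have "1 / real (Suc (\<phi> k)) \<le> 1 / Suc k" using seq_suble[OF \<phi>(1), of k] by (simp add: frac_le)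
        have "norm (E (\<phi> k) j * (M (\<phi> k) j a - R (\<phi> k) j a)) = E (\<phi> k) j * \<bar>M (\<phi> k) j a - R (\<phi> k) j a\<bar>"
          using e by (simp add: abs_mult)
        also have "\<dots> \<le> E (\<phi> k) j * 1" using m r e by (intro mult_left_mono) auto
        also have "\<dots> \<le> 1 / Suc k" using e \<open>1 / real (Suc (\<phi> k)) \<le> 1 / Suc k\<close> by simp
        finally show "norm (E (\<phi> k) j * (M (\<phi> k) j a - R (\<phi> k) j a)) \<le> 1 / real (Suc k)" .
      qed
      from tendsto_add[OF limR[OF j a] this]
      show ?thesis using True by (simp add: agg_def algebra_simps)
    qed
  qed
  have ne: "nash_eq n A \<pi> rb"
    unfolding nash_eq_def mixed_profile_def
  proof (intro conjI allI impI)
    fix i assume "i < n" then show "mixed_strategy (A i) (rb i)" by (rule rbm)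
  next
    fix i t assume i: "i < n" and t: "mixed_strategy (A i) t"
    have l1: "(\<lambda>k. mlext n A (\<pi> i) ((agg J (E (\<phi> k)) (R (\<phi> k)) (M (\<phi> k)))(i:=t))) \<longlonglongrightarrow> mlext n A (\<pi> i) (rb(i:=t))"
      by (rule mlext_tendsto) (use limA in auto)
    have l2: "(\<lambda>k. mlext n A (\<pi> i) ((agg J (E (\<phi> k)) (R (\<phi> k)) (M (\<phi> k)))(i:=R (\<phi> k) i))) \<longlonglongrightarrow> mlext n A (\<pi> i) (rb(i:=rb i))"
    proof (rule mlext_tendsto, intro allI impI ballI)
      fix j a assume j: "j < n" and a: "a \<in> A j"
      show "(\<lambda>k. ((agg J (E (\<phi> k)) (R (\<phi> k)) (M (\<phi> k)))(i:=R (\<phi> k) i)) j a) \<longlonglongrightarrow> (rb(i:=rb i)) j a"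
      proof (cases "j = i")
        case True then show ?thesis using limR[OF j a] by simp
      next
        case False then show ?thesis using limA j a by simp
      qed
    qed
    have "mlext n A (\<pi> i) (rb(i:=t)) \<le> mlext n A (\<pi> i) (rb(i:=rb i))"
      by (rule LIMSEQ_le[OF l1 l2]) (use BR[OF i t] in auto)
    then show "mlext n A (\<pi> i) (rb(i:=t)) \<le> mlext n A (\<pi> i) rb" by simp
  qed
  have "\<forall>i<n. rb i = \<sigma> i" using une ne unfolding unique_nash_eq_def by blast
  then have rbs: "\<And>i. i < n \<Longrightarrow> rb i = \<sigma> i" by blast
  define D where "D k = (\<Sum>(i,a)\<in>S. (R (\<phi> k) i a - \<sigma> i a)\<^sup>2)" for k
  have "D \<longlonglongrightarrow> (\<Sum>(i,a)\<in>S. (rb i a - \<sigma> i a)\<^sup>2)"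
    unfolding D_def
  proof (rule tendsto_sum)
    fix s assume "s \<in> S"
    then obtain i a where s: "s = (i, a)" "i < n" "a \<in> A i" by (auto simp: S_def)
    show "(\<lambda>k. case s of (i, a) \<Rightarrow> (R (\<phi> k) i a - \<sigma> i a)\<^sup>2) \<longlonglongrightarrow> (case s of (i, a) \<Rightarrow> (rb i a - \<sigma> i a)\<^sup>2)"
      using limR[OF s(2,3)] by (simp add: s(1) tendsto_intros)
  qed
  moreover have "(\<Sum>(i,a)\<in>S. (rb i a - \<sigma> i a)\<^sup>2) = 0"
    by (intro sum.neutral) (auto simp: S_def rbs)
  ultimately have D0: "D \<longlonglongrightarrow> 0" by simp
  have "\<eta>\<^sup>2 \<le> D k" for k
  proof -
    obtain i where i: "i < n" "\<eta> < strat_dist (A i) (R (\<phi> k) i) (\<sigma> i)" using far by blast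
    have fin: "finite (A i)" using finA i by blast
    have "\<eta>\<^sup>2 < (\<Sum>a\<in>A i. (R (\<phi> k) i a - \<sigma> i a)\<^sup>2)"
    proof (rule ccontr)
      assume "\<not> ?thesis"
      then have "(\<Sum>a\<in>A i. (R (\<phi> k) i a - \<sigma> i a)\<^sup>2) \<le> \<eta>\<^sup>2" by (simp add: not_less)
      then have "sqrt (\<Sum>a\<in>A i. (R (\<phi> k) i a - \<sigma> i a)\<^sup>2) \<le> sqrt (\<eta>\<^sup>2)" by (rule real_sqrt_le_mono)
      then show False using i eta by (simp add: strat_dist_def)
    qed
    also have "\<dots> \<le> (\<Sum>i'<n. \<Sum>a\<in>A i'. (R (\<phi> k) i' a - \<sigma> i' a)\<^sup>2)"
      using i by (intro member_le_sum[of i "{..<n}" "\<lambda>i'. \<Sum>a\<in>A i'. (R (\<phi> k) i' a - \<sigma> i' a)\<^sup>2"]) (auto intro: sum_nonneg)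
    also have "\<dots> = D k" unfolding D_def S_def using finA by (subst sum.Sigma) auto
    finally show ?thesis by simp
  qed
  then have "\<eta>\<^sup>2 \<le> 0" using LIMSEQ_le_const[OF D0] by blast
  moreover have "0 < \<eta>\<^sup>2" using eta by simp
  ultimately show False by linarith
qed

lemma case_unique:
  assumes finA: "\<forall>i<n. finite (A i) \<and> A i \<noteq> {}" and une: "unique_nash_eq n A \<pi> \<sigma>"
  shows "exist_prop n A \<pi> \<sigma>"
  unfolding exist_prop_def
proof (intro allI impI)
  fix J :: "nat set" and \<theta>m :: "nat \<Rightarrow> 'a ptype" and \<eta> :: real
  assume h: "J \<noteq> {} \<and> J \<subseteq> {..<n} \<and> (\<forall>j\<in>J. \<theta>m j \<in> types n A - supp (mu0 n A \<pi> j)) \<and> 0 < \<eta>"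
  have ne: "nash_eq n A \<pi> \<sigma>" using une by (simp add: unique_nash_eq_def)
  have ms: "\<forall>i<n. mixed_strategy (A i) (\<sigma> i)" using ne by (auto simp: nash_eq_def mixed_profile_def)
  have eta2: "\<eta>/2 > 0" using h by simp
  obtain d where d: "d > 0" and dcl: "\<And>\<epsilon> r m. (\<forall>j\<in>J. 0 \<le> \<epsilon> j \<and> \<epsilon> j < d) \<and> (\<forall>i<n. mixed_strategy (A i) (r i)) \<and>
     (\<forall>j\<in>J. mixed_strategy (A j) (m j)) \<and>
     (\<forall>i<n. \<forall>t. mixed_strategy (A i) t \<longrightarrow>
        mlext n A (\<pi> i) ((agg J \<epsilon> r m)(i:=t)) \<le> mlext n A (\<pi> i) ((agg J \<epsilon> r m)(i := r i)))
     \<Longrightarrow> (\<forall>i<n. strat_dist (A i) (r i) (\<sigma> i) \<le> \<eta>/2)"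
    using close_unique[OF finA une eta2, of J] by blast
  define \<epsilon>b where "\<epsilon>b = min (1/2) d"
  show "\<exists>\<eta>b \<epsilon>b. 0 \<le> \<eta>b \<and> \<eta>b < \<eta> \<and> 0 < \<epsilon>b \<and> \<epsilon>b < 1 \<and>
       (\<forall>\<epsilon>. (\<forall>j\<in>J. 0 < \<epsilon> j \<and> \<epsilon> j < \<epsilon>b) \<longrightarrow>
          (\<exists>r m. goodeq n A \<pi> J \<theta>m \<epsilon> r m \<and> (\<forall>i<n. strat_dist (A i) (r i) (\<sigma> i) \<le> \<eta>b)))"
  proof (rule exI[of _ "\<eta>/2"], rule exI[of _ \<epsilon>b], intro conjI allI impI)
    show "0 \<le> \<eta>/2" "\<eta>/2 < \<eta>" using h by auto
    show "0 < \<epsilon>b" "\<epsilon>b < 1" using d by (auto simp: \<epsilon>b_def)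
    fix \<epsilon> :: "nat \<Rightarrow> real" assume he: "\<forall>j\<in>J. 0 < \<epsilon> j \<and> \<epsilon> j < \<epsilon>b"
    obtain r m where rm: "\<forall>i<n. mixed_strategy (A i) (r i)"
      "\<forall>i\<in>{..<n}. \<forall>t. mixed_strategy (A i) t \<longrightarrow>
        mlext n A (\<pi> i) ((agg J \<epsilon> r m)(i:=t)) \<le> mlext n A (\<pi> i) ((agg J \<epsilon> r m)(i := r i))"
      "\<forall>j\<in>J. mixed_strategy (A j) (m j) \<and> (\<forall>t. mixed_strategy (A j) t \<longrightarrow>
        mlext n A (\<theta>m j) ((agg J \<epsilon> r m)(j:=t)) \<le> mlext n A (\<theta>m j) ((agg J \<epsilon> r m)(j := m j)))"
      using game_eq[OF finA _ _ ms, of J "{..<n}" \<pi> \<epsilon> \<theta>m] h by blast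
    have g: "goodeq n A \<pi> J \<theta>m \<epsilon> r m"
      unfolding goodeq_def using rm by auto
    have "(\<forall>j\<in>J. 0 \<le> \<epsilon> j \<and> \<epsilon> j < d) \<and> (\<forall>i<n. mixed_strategy (A i) (r i)) \<and>
     (\<forall>j\<in>J. mixed_strategy (A j) (m j)) \<and>
     (\<forall>i<n. \<forall>t. mixed_strategy (A i) t \<longrightarrow>
        mlext n A (\<pi> i) ((agg J \<epsilon> r m)(i:=t)) \<le> mlext n A (\<pi> i) ((agg J \<epsilon> r m)(i := r i)))"
      using he rm by (auto simp: \<epsilon>b_def)
    from dcl[OF this] g show "\<exists>r m. goodeq n A \<pi> J \<theta>m \<epsilon> r m \<and> (\<forall>i<n. strat_dist (A i) (r i) (\<sigma> i) \<le> \<eta>/2)"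
      by blast
  qed
qed



theorem mainTheorem12:
  fixes n :: nat and A :: "nat \<Rightarrow> 'a set" and \<pi> :: "nat \<Rightarrow> 'a ptype"
    and \<sigma> :: "nat \<Rightarrow> 'a \<Rightarrow> real"
  assumes "1 \<le> n"
    and "\<forall>i<n. finite (A i) \<and> A i \<noteq> {}"
    and "mixed_profile n A \<sigma>"
    and "strict_nash_eq n A \<pi> \<sigma> \<or> (nash_eq n A \<pi> \<sigma> \<and> completely_mixed n A \<sigma>)
         \<or> unique_nash_eq n A \<pi> \<sigma>"
  shows "stable_no_obs n A \<pi> \<sigma>"
proof -
  have finA: "\<forall>i<n. finite (A i)" using assms(2) by blast
  have "nash_eq n A \<pi> \<sigma> \<and> exist_prop n A \<pi> \<sigma>"
    using assms(4)
  proof (elim disjE)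
    assume h: "strict_nash_eq n A \<pi> \<sigma>"
    then show ?thesis using case_strict[OF assms(2) h] by (simp add: strict_nash_eq_def)
  next
    assume h: "nash_eq n A \<pi> \<sigma> \<and> completely_mixed n A \<sigma>"
    then show ?thesis using case_mixed[OF assms(2)] by blast
  next
    assume h: "unique_nash_eq n A \<pi> \<sigma>"
    then show ?thesis using case_unique[OF assms(2) h] by (simp add: unique_nash_eq_def)
  qed
  then show ?thesis using stable_from_exist[OF finA] by blast
qed

end
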